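(* For every $n\ge1$ and every pattern $\sigma\in\mathfrak{S}_3$, the number of $3$-arrangements $\mathfrak{a}$ of $[n]$ whose permutation form $\mathrm{pf}_3(\mathfrak{a})$ avoids $\sigma$ equals $C(n+2)-2^n$, where $C(j)=\frac{1}{j+1}\binom{2j}{j}$ is the $j$-th Catalan number.
   Context: $\mathfrak{S}_n$ is the set of permutations of $[n]=\{1,\dots,n\}$; $\mathrm{FIX}(\pi)=\{i:\pi(i)=i\}$. A $3$-arrangement of $[n]$ is a pair $\mathfrak{a}=(\pi,\phi)$ with $\pi\in\mathfrak{S}_n$ and $\phi:\mathrm{FIX}(\pi)\to\{-1,-2,-3\}$ arbitrary. The permutation form $\mathrm{pf}_3(\mathfrak{a})$ is obtained from $\pi(1)\cdots\pi(n)$ by replacing $\pi(i)$ with $\phi(i)$ for each $i\in\mathrm{FIX}(\pi)$ with $\phi(i)\neq-3$, and then replacing every occurrence of the $j$-th smallest positive letter by $j$, for all $j$. For an integer word $w$, $\mathrm{red}(w)$ replaces every occurrence of the $j$-th smallest letter of $w$ by $j$. A word $w=w_1\cdots w_n$ avoids $\sigma\in\mathfrak{S}_3$ if there are no $i_1<i_2<i_3$ with $\mathrm{red}(w_{i_1}w_{i_2}w_{i_3})=\sigma$. *)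

theory Defs
  imports "HOL-Combinatorics.Permutations"
begin

text \<open>A 3-arrangement of [n] is a pair (pi, phi): pi permutes {1..n}, and
  phi assigns to every fixed point i in {1..n} of pi a value in {-1,-2,-3};
  outside the fixed points phi is normalised to 0 (so each arrangement has a
  unique representative).\<close>
definition arrangements3 :: "nat \<Rightarrow> ((nat \<Rightarrow> nat) \<times> (nat \<Rightarrow> int)) set" where
  "arrangements3 n = {(\<pi>, \<phi>). \<pi> permutes {1..n} \<and>
     (\<forall>i. \<phi> i \<in> (if i \<in> {1..n} \<and> \<pi> i = i then {-1,-2,-3} else {0}))}"

definition pf3_raw :: "(nat \<Rightarrow> nat) \<Rightarrow> (nat \<Rightarrow> int) \<Rightarrow> nat \<Rightarrow> int" where
  "pf3_raw \<pi> \<phi> i = (if \<pi> i = i \<and> \<phi> i \<noteq> -3 then \<phi> i else int (\<pi> i))"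

definition pf3 :: "nat \<Rightarrow> (nat \<Rightarrow> nat) \<Rightarrow> (nat \<Rightarrow> int) \<Rightarrow> int list" where
  "pf3 n \<pi> \<phi> = map (\<lambda>i. let v = pf3_raw \<pi> \<phi> i in
      if v > 0 then int (card {u \<in> pf3_raw \<pi> \<phi> ` {1..n}. 0 < u \<and> u \<le> v}) else v)
    [1..<n+1]"

definition red :: "int list \<Rightarrow> int list" where
  "red w = map (\<lambda>x. int (card {y \<in> set w. y \<le> x})) w"

definition avoids :: "int list \<Rightarrow> (nat \<Rightarrow> nat) \<Rightarrow> bool" where
  "avoids w \<sigma> \<longleftrightarrow> \<not> (\<exists>i1 i2 i3. i1 < i2 \<and> i2 < i3 \<and> i3 < length w \<and>
      red [w ! i1, w ! i2, w ! i3] = [int (\<sigma> 1), int (\<sigma> 2), int (\<sigma> 3)])"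

definition catalan :: "nat \<Rightarrow> nat" where
  "catalan j = (2 * j choose j) div (j + 1)"

end

theory Submission
  imports Defs
begin

definition avP :: "(int \<Rightarrow> int \<Rightarrow> int \<Rightarrow> bool) \<Rightarrow> int list \<Rightarrow> bool" where
  "avP Q w \<longleftrightarrow> \<not> (\<exists>i j k. i < j \<and> j < k \<and> k < length w \<and> Q (w!i) (w!j) (w!k))"

definition ins :: "int list \<Rightarrow> nat \<Rightarrow> int \<Rightarrow> int list" where
  "ins w s x = take s w @ x # drop s w"

lemma length_ins[simp]: "length (ins w s x) = Suc (length w)"
  unfolding ins_def by simp

lemma nth_ins: "s \<le> length w \<Longrightarrow> ins w s x ! i = (if i < s then w!i else if i = s then x else w!(i-1))"
  unfolding ins_def
  by (auto simp: nth_append min_def nth_Cons' )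

lemma set_ins: "s \<le> length w \<Longrightarrow> set (ins w s x) = insert x (set w)"
proof -
  have "set w = set (take s w) \<union> set (drop s w)"
    by (metis append_take_drop_id set_append)
  then show ?thesis unfolding ins_def by auto
qed

lemma ins_char:
  assumes s: "s \<le> length w"
  shows "avP Q (ins w s N) \<longleftrightarrow> avP Q w
     \<and> \<not> (\<exists>i j. i < j \<and> j < s \<and> Q (w!i) (w!j) N)
     \<and> \<not> (\<exists>i j. i < s \<and> s \<le> j \<and> j < length w \<and> Q (w!i) N (w!j))
     \<and> \<not> (\<exists>i j. s \<le> i \<and> i < j \<and> j < length w \<and> Q N (w!i) (w!j))"
    (is "?L \<longleftrightarrow> ?R")
proof
  assume L: ?L
  let ?w = "ins w s N"
  let ?f = "\<lambda>i::nat. if i < s then i else Suc i"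
  have fw: "?w ! (?f i) = w ! i" if "i < length w" for i
    using s that by (auto simp: nth_ins)
  have ws: "?w ! s = N" using s by (simp add: nth_ins)
  have A: "avP Q w"
    unfolding avP_def
  proof
    assume "\<exists>i j k. i < j \<and> j < k \<and> k < length w \<and> Q (w!i) (w!j) (w!k)"
    then obtain i j k where o: "i < j" "j < k" "k < length w" "Q (w!i) (w!j) (w!k)" by blast
    have "?f i < ?f j" "?f j < ?f k" "?f k < length ?w" using o by auto
    moreover have "Q (?w ! ?f i) (?w ! ?f j) (?w ! ?f k)" using o fw by simp
    ultimately show False using L unfolding avP_def by blast
  qed
  have B: "\<not> (\<exists>i j. i < j \<and> j < s \<and> Q (w!i) (w!j) N)"
  proof
    assume "\<exists>i j. i < j \<and> j < s \<and> Q (w!i) (w!j) N"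
    then obtain i j where o: "i < j" "j < s" "Q (w!i) (w!j) N" by blast
    have "Q (?w ! i) (?w ! j) (?w ! s)" using o s ws by (simp add: nth_ins)
    moreover have "s < length ?w" using s by simp
    ultimately show False using L o unfolding avP_def by blast
  qed
  have C: "\<not> (\<exists>i j. i < s \<and> s \<le> j \<and> j < length w \<and> Q (w!i) N (w!j))"
  proof
    assume "\<exists>i j. i < s \<and> s \<le> j \<and> j < length w \<and> Q (w!i) N (w!j)"
    then obtain i j where o: "i < s" "s \<le> j" "j < length w" "Q (w!i) N (w!j)" by blast
    have "Q (?w ! i) (?w ! s) (?w ! Suc j)" using o s ws by (simp add: nth_ins)
    moreover have "Suc j < length ?w" using o by simp
    ultimately show False using L o unfolding avP_def by (meson le_imp_less_Suc)
  qed
  have D: "\<not> (\<exists>i j. s \<le> i \<and> i < j \<and> j < length w \<and> Q N (w!i) (w!j))"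
  proof
    assume "\<exists>i j. s \<le> i \<and> i < j \<and> j < length w \<and> Q N (w!i) (w!j)"
    then obtain i j where o: "s \<le> i" "i < j" "j < length w" "Q N (w!i) (w!j)" by blast
    have "Q (?w ! s) (?w ! Suc i) (?w ! Suc j)" using o s ws by (simp add: nth_ins)
    moreover have "Suc j < length ?w" using o by simp
    ultimately show False using L o unfolding avP_def by (meson Suc_less_eq le_imp_less_Suc)
  qed
  show ?R using A B C D by blast
next
  assume R: ?R
  let ?w = "ins w s N"
  show ?L unfolding avP_def
  proof
    assume "\<exists>i j k. i < j \<and> j < k \<and> k < length ?w \<and> Q (?w!i) (?w!j) (?w!k)"
    then obtain i j k where o: "i < j" "j < k" "k < length ?w" "Q (?w!i) (?w!j) (?w!k)" by blast
    have kk: "k \<le> length w" using o by simp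
    show False
    proof (cases "k < s")
      case True
      then have "Q (w!i) (w!j) (w!k)" using o s by (simp add: nth_ins)
      then show False using R o True s unfolding avP_def by auto
    next
      case False
      show False
      proof (cases "k = s")
        case True
        then have "Q (w!i) (w!j) N" using o s by (simp add: nth_ins)
        then show False using R o True by auto
      next
        case False
        then have ks: "s < k" using \<open>\<not> k < s\<close> by simp
        have wk: "?w ! k = w ! (k-1)" using ks s by (simp add: nth_ins)
        have k1: "k - 1 < length w" using o ks by simp
        show False
        proof (cases "j < s")
          case True
          then have "Q (w!i) (w!j) (w!(k-1))" using o s wk by (simp add: nth_ins)
          moreover have "j < k - 1" using True ks by simp
          ultimately show False using R o k1 unfolding avP_def by blast
        next
          case False
          show False
          proof (cases "j = s")
            case True
            then have "Q (w!i) N (w!(k-1))" using o s wk by (simp add: nth_ins)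
            moreover have "s \<le> k - 1" using ks by simp
            ultimately show False using R o k1 True by blast
          next
            case False
            then have js: "s < j" using \<open>\<not> j < s\<close> by simp
            have wj: "?w ! j = w ! (j-1)" using js s by (simp add: nth_ins)
            have jk: "j - 1 < k - 1" using js o by simp
            show False
            proof (cases "i < s")
              case True
              then have "Q (w!i) (w!(j-1)) (w!(k-1))" using o s wk wj by (simp add: nth_ins)
              moreover have "i < j - 1" using True js by simp
              ultimately show False using R k1 jk unfolding avP_def by blast
            next
              case False
              show False
              proof (cases "i = s")
                case True
                then have "Q N (w!(j-1)) (w!(k-1))" using o s wk wj by (simp add: nth_ins)
                moreover have "s \<le> j - 1" using js by simp
                ultimately show False using R k1 jk by blast
              next
                case False
                then have is': "s < i" using \<open>\<not> i < s\<close> by simp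
                then have "Q (w!(i-1)) (w!(j-1)) (w!(k-1))" using o s wk wj by (simp add: nth_ins)
                moreover have "i - 1 < j - 1" using is' o by simp
                ultimately show False using R k1 jk unfolding avP_def by blast
              qed
            qed
          qed
        qed
      qed
    qed
  qed
qed


definition posset :: "int list \<Rightarrow> int set" where
  "posset w = {x \<in> set w. 0 < x}"

definition wfw :: "int list \<Rightarrow> bool" where
  "wfw w \<longleftrightarrow> set w \<subseteq> {x. x = -1 \<or> x = -2 \<or> 0 < x}
     \<and> (\<forall>i<length w. \<forall>j<length w. w!i = w!j \<longrightarrow> 0 < w!i \<longrightarrow> i = j)
     \<and> posset w = {1..int (card (posset w))}"

definition tp :: "int list \<Rightarrow> int" where
  "tp w = int (card (posset w)) + 1"

definition Vs :: "(int \<Rightarrow> int \<Rightarrow> int \<Rightarrow> bool) \<Rightarrow> int list \<Rightarrow> nat set" where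
  "Vs Q w = {s. s \<le> length w \<and> avP Q (ins w s (tp w))}"

definition act :: "(int \<Rightarrow> int \<Rightarrow> int \<Rightarrow> bool) \<Rightarrow> int list \<Rightarrow> nat" where
  "act Q w = card (Vs Q w)"

definition AV :: "(int \<Rightarrow> int \<Rightarrow> int \<Rightarrow> bool) \<Rightarrow> nat \<Rightarrow> int list set" where
  "AV Q n = {w. length w = n \<and> wfw w \<and> avP Q w}"

definition NO :: "nat \<Rightarrow> int list set" where
  "NO m = {u. length u = m \<and> set u \<subseteq> {-1,-2}}"

lemma finite_posset[simp]: "finite (posset w)"
  unfolding posset_def by simp

lemma top_gt: "wfw w \<Longrightarrow> x \<in> set w \<Longrightarrow> x < tp w"
proof -
  assume w: "wfw w" and x: "x \<in> set w"
  show "x < tp w"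
  proof (cases "0 < x")
    case True
    then have "x \<in> posset w" using x unfolding posset_def by simp
    then have "x \<le> int (card (posset w))" using w unfolding wfw_def by auto
    then show ?thesis unfolding tp_def by simp
  next
    case False
    then show ?thesis unfolding tp_def by simp
  qed
qed

lemma top_notin: "wfw w \<Longrightarrow> tp w \<notin> set w"
  using top_gt by blast

lemma top_pos: "0 < tp w"
  unfolding tp_def by simp

lemma posset_ins: "s \<le> length w \<Longrightarrow> posset (ins w s x) = (if 0 < x then insert x (posset w) else posset w)"
  unfolding posset_def using set_ins by auto

lemma ins_idx: "s \<le> length w \<Longrightarrow> i < Suc (length w) \<Longrightarrow> i \<noteq> s \<Longrightarrow>
   ins w s x ! i = w ! (if i < s then i else i - 1) \<and> (if i < s then i else i - 1) < length w"
  by (auto simp: nth_ins)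

lemma wf_ins:
  assumes w: "wfw w" and s: "s \<le> length w"
  shows "wfw (ins w s (tp w))" "tp (ins w s (tp w)) = tp w + 1"
proof -
  let ?w = "ins w s (tp w)"
  have tn: "tp w \<notin> posset w" using top_notin[OF w] unfolding posset_def by auto
  have P: "posset ?w = insert (tp w) (posset w)" using posset_ins[OF s] top_pos by simp
  have cP: "card (posset ?w) = Suc (card (posset w))" using P tn by simp
  have t1: "tp ?w = int (card (posset ?w)) + 1" by (rule tp_def)
  show "tp ?w = tp w + 1" using t1 cP tp_def[of w] by simp
  define c where "c = card (posset w)"
  have ps: "posset w = {1..int c}" using w unfolding wfw_def c_def by blast
  have t2: "tp w = int c + 1" unfolding tp_def c_def ..
  have P2: "posset ?w = {1..int c + 1}" using P ps t2 by auto
  have "card (posset ?w) = c + 1" using cP c_def by simp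
  then have "posset ?w = {1..int (card (posset ?w))}" using P2 by simp
  moreover have "set ?w \<subseteq> {x. x = -1 \<or> x = -2 \<or> 0 < x}"
    using w top_pos[of w] unfolding wfw_def set_ins[OF s] by auto
  moreover have "\<forall>i<length ?w. \<forall>j<length ?w. ?w!i = ?w!j \<longrightarrow> 0 < ?w!i \<longrightarrow> i = j"
  proof (intro allI impI)
    fix i j assume i: "i < length ?w" and j: "j < length ?w" and e: "?w!i = ?w!j" and p: "0 < ?w!i"
    show "i = j"
    proof (cases "i = s \<or> j = s")
      case True
      show ?thesis
      proof (rule ccontr)
        assume ij: "i \<noteq> j"
        then show False
        proof (cases "i = s")
          case True
          then have "j \<noteq> s" using ij by simp
          then have "?w ! j \<in> set w" using ins_idx[OF s, of j] j by auto
          moreover have "?w ! i = tp w" using True s by (simp add: nth_ins)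
          ultimately show False using e top_notin[OF w] by simp
        next
          case False
          then have "j = s" using \<open>i = s \<or> j = s\<close> by simp
          then have "?w ! i \<in> set w" using ins_idx[OF s, of i] i False by auto
          moreover have "?w ! j = tp w" using \<open>j = s\<close> s by (simp add: nth_ins)
          ultimately show False using e top_notin[OF w] by simp
        qed
      qed
    next
      case False
      define i' where "i' = (if i < s then i else i - 1)"
      define j' where "j' = (if j < s then j else j - 1)"
      have I: "?w ! i = w ! i'" "i' < length w" using ins_idx[OF s, of i] i False unfolding i'_def by auto
      have J: "?w ! j = w ! j'" "j' < length w" using ins_idx[OF s, of j] j False unfolding j'_def by auto
      have "i' = j'" using w I J e p unfolding wfw_def by metis
      then show ?thesis using False unfolding i'_def j'_def by (auto split: if_splits)
    qed
  qed
  ultimately show "wfw ?w" unfolding wfw_def by blast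
qed

lemma finite_AV: "finite (AV Q n)"
proof -
  have "AV Q n \<subseteq> {xs. set xs \<subseteq> {-2..int n} \<and> length xs = n}"
  proof
    fix w assume "w \<in> AV Q n"
    then have w: "wfw w" "length w = n" unfolding AV_def by auto
    have c: "card (posset w) \<le> n"
    proof -
      have "card (posset w) \<le> card (set w)" unfolding posset_def by (rule card_mono) auto
      also have "\<dots> \<le> n" using w(2) card_length by blast
      finally show ?thesis .
    qed
    have "set w \<subseteq> {-2..int n}"
    proof
      fix x assume x: "x \<in> set w"
      have "x < tp w" using top_gt[OF w(1) x] .
      moreover have "x = -1 \<or> x = -2 \<or> 0 < x" using w(1) x unfolding wfw_def by auto
      ultimately show "x \<in> {-2..int n}" using c unfolding tp_def by auto
    qed
    then show "w \<in> {xs. set xs \<subseteq> {-2..int n} \<and> length xs = n}" using w by simp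
  qed
  moreover have "finite {xs. set xs \<subseteq> {-2..int n} \<and> length xs = n}"
    by (rule finite_lists_length_eq) simp
  ultimately show ?thesis by (rule finite_subset)
qed

lemma finite_Vs[simp]: "finite (Vs Q w)"
  unfolding Vs_def by (rule finite_subset[of _ "{..length w}"]) auto

lemma act_le: "act Q w \<le> Suc (length w)"
proof -
  have "act Q w \<le> card {..length w}" unfolding act_def Vs_def by (rule card_mono) auto
  then show ?thesis by simp
qed


lemma ins_take_drop: "s \<le> length w \<Longrightarrow> take s (ins w s x) = take s w \<and> drop (Suc s) (ins w s x) = drop s w"
  unfolding ins_def by simp

lemma ins_inj:
  assumes "s \<le> length w" "s2 \<le> length w2" "x \<notin> set w" "ins w s x = ins w2 s2 x"
    "x \<notin> set w2"
  shows "s = s2 \<and> w = w2"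
proof -
  have L: "length w = length w2" using assms(4) by (metis length_ins Suc_inject)
  have s_eq: "s = s2"
  proof (rule ccontr)
    assume ne: "s \<noteq> s2"
    have "ins w s x ! s2 = x" using assms(2,4) by (simp add: nth_ins)
    moreover have "ins w s x ! s2 \<in> set w" using ins_idx[OF assms(1), of s2] ne assms(2) L by auto
    ultimately show False using assms(3) by simp
  qed
  have "w = take s w @ drop s w" by simp
  also have "\<dots> = take s (ins w s x) @ drop (Suc s) (ins w s x)" using ins_take_drop[OF assms(1)] by simp
  also have "\<dots> = take s2 (ins w2 s2 x) @ drop (Suc s2) (ins w2 s2 x)" using assms(4) s_eq by simp
  also have "\<dots> = w2" using ins_take_drop[OF assms(2)] by simp
  finally show ?thesis using s_eq by simp
qed

lemma tree_bij:
  "bij_betw (\<lambda>(w,s). ins w s (tp w)) (Sigma (AV Q n) (Vs Q)) {w'\<in>AV Q (Suc n). posset w' \<noteq> {}}"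
proof -
  let ?g = "\<lambda>(w,s). ins w s (tp w)"
  have inj: "inj_on ?g (Sigma (AV Q n) (Vs Q))"
  proof (rule inj_onI)
    fix p1 p2 assume p1: "p1 \<in> Sigma (AV Q n) (Vs Q)" and p2: "p2 \<in> Sigma (AV Q n) (Vs Q)"
      and e: "?g p1 = ?g p2"
    obtain w s where [simp]: "p1 = (w,s)" by fastforce
    obtain w2 s2 where [simp]: "p2 = (w2,s2)" by fastforce
    have w: "wfw w" "s \<le> length w" using p1 unfolding AV_def Vs_def by auto
    have w2: "wfw w2" "s2 \<le> length w2" using p2 unfolding AV_def Vs_def by auto
    have e': "ins w s (tp w) = ins w2 s2 (tp w2)" using e by simp
    have "tp (ins w s (tp w)) = tp w + 1" using wf_ins[OF w] by simp
    moreover have "tp (ins w2 s2 (tp w2)) = tp w2 + 1" using wf_ins[OF w2] by simp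
    ultimately have t: "tp w = tp w2" using e' by simp
    have "s = s2 \<and> w = w2"
      by (rule ins_inj[OF w(2) w2(2) top_notin[OF w(1)]]) (use e' t top_notin[OF w2(1)] in auto)
    then show "p1 = p2" by simp
  qed
  have img: "?g ` (Sigma (AV Q n) (Vs Q)) = {w'\<in>AV Q (Suc n). posset w' \<noteq> {}}"
  proof
    show "?g ` (Sigma (AV Q n) (Vs Q)) \<subseteq> {w'\<in>AV Q (Suc n). posset w' \<noteq> {}}"
    proof
      fix y assume "y \<in> ?g ` (Sigma (AV Q n) (Vs Q))"
      then obtain w s where p: "(w, s) \<in> Sigma (AV Q n) (Vs Q)" and y: "y = ins w s (tp w)" by auto
      have w: "wfw w" "s \<le> length w" "length w = n" using p unfolding AV_def Vs_def by auto
      have a: "avP Q (ins w s (tp w))" using p unfolding Vs_def by auto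
      have "tp w \<in> posset (ins w s (tp w))" using posset_ins[OF w(2)] top_pos by simp
      then show "y \<in> {w'\<in>AV Q (Suc n). posset w' \<noteq> {}}"
        using wf_ins[OF w(1,2)] a w(3) y unfolding AV_def by auto
    qed
  next
    show "{w'\<in>AV Q (Suc n). posset w' \<noteq> {}} \<subseteq> ?g ` (Sigma (AV Q n) (Vs Q))"
    proof
      fix w' assume "w' \<in> {w'\<in>AV Q (Suc n). posset w' \<noteq> {}}"
      then have w'A: "w' \<in> AV Q (Suc n)" and ne: "posset w' \<noteq> {}" by auto
      have w': "wfw w'" "length w' = Suc n" "avP Q w'" using w'A unfolding AV_def by auto
      have D: "\<forall>i<length w'. \<forall>j<length w'. w'!i = w'!j \<longrightarrow> 0 < w'!i \<longrightarrow> i = j"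
        using w' unfolding wfw_def by blast
      define c where "c = card (posset w')"
      have ps: "posset w' = {1..int c}" using w' unfolding wfw_def c_def by blast
      have c1: "1 \<le> c"
      proof (rule ccontr)
        assume "\<not> 1 \<le> c"
        then have "c = 0" by simp
        then have "posset w' = {}" using ps by simp
        then show False using ne by simp
      qed
      have "int c \<in> posset w'" using ps c1 by simp
      then have "int c \<in> set w'" unfolding posset_def by simp
      then obtain p where p: "p < length w'" "w' ! p = int c" by (metis in_set_conv_nth)
      define w where "w = take p w' @ drop (Suc p) w'"
      have lw: "length w = n" using p w' unfolding w_def by simp
      have pl: "p \<le> length w" using lw p w' by simp
      have tw: "take p w = take p w'" "drop p w = drop (Suc p) w'" unfolding w_def using p by (simp_all add: min_def)
      have iw: "ins w p (int c) = w'"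
        unfolding ins_def tw using id_take_nth_drop[OF p(1)] p(2) by simp
      have cn: "int c \<notin> set w"
      proof
        assume "int c \<in> set w"
        then obtain q where q: "q < length w" "w ! q = int c" by (metis in_set_conv_nth)
        define q' where "q' = (if q < p then q else Suc q)"
        have "w' ! q' = w ! q" using iw[symmetric] pl q unfolding q'_def by (auto simp: nth_ins)
        then have e: "w' ! q' = w' ! p" using q p by simp
        have "q' \<noteq> p" "q' < length w'" using q lw w' unfolding q'_def by auto
        moreover have "0 < w' ! q'" using e p c1 by simp
        ultimately show False using D e p by blast
      qed
      have P: "posset w' = insert (int c) (posset w)" using posset_ins[OF pl, of "int c"] iw c1 by simp
      have cw: "card (posset w) = c - 1"
      proof -
        have "int c \<notin> posset w" using cn unfolding posset_def by simp
        then have "card (posset w') = Suc (card (posset w))" using P by simp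
        then show ?thesis using c_def by simp
      qed
      have ncp: "int c \<notin> posset w" using cn unfolding posset_def by simp
      have "posset w = posset w' - {int c}" using P ncp by simp
      also have "\<dots> = {1..int c - 1}" unfolding ps by auto
      finally have psw: "posset w = {1..int c - 1}" .
      have psw2: "posset w = {1..int (card (posset w))}" unfolding cw using psw c1 by (simp add: of_nat_diff)
      have tpw: "tp w = int c" unfolding tp_def cw using c1 by simp
      have dist: "\<forall>i<length w. \<forall>j<length w. w!i = w!j \<longrightarrow> 0 < w!i \<longrightarrow> i = j"
      proof (intro allI impI)
        fix i j assume i: "i < length w" and j: "j < length w" and e: "w!i = w!j" and pos: "0 < w!i"
        define i' where "i' = (if i < p then i else Suc i)"
        define j' where "j' = (if j < p then j else Suc j)"
        have "w' ! i' = w ! i" unfolding i'_def using iw[symmetric] pl i by (auto simp: nth_ins)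
        moreover have "w' ! j' = w ! j" unfolding j'_def using iw[symmetric] pl j by (auto simp: nth_ins)
        moreover have "i' < length w'" "j' < length w'" using i j lw w' unfolding i'_def j'_def by auto
        ultimately have "i' = j'" using D e pos by auto
        then show "i = j" unfolding i'_def j'_def by (auto split: if_splits)
      qed
      have lets: "set w \<subseteq> {x. x = -1 \<or> x = -2 \<or> 0 < x}"
      proof -
        have "set w \<subseteq> set w'" using set_ins[OF pl, of "int c"] iw by auto
        then show ?thesis using w' unfolding wfw_def by auto
      qed
      have wfw: "wfw w" unfolding wfw_def using lets dist psw2 by blast
      have avw: "avP Q w" using ins_char[OF pl, of Q "int c"] iw w' by simp
      have "p \<in> Vs Q w" unfolding Vs_def using pl iw tpw w' by simp
      moreover have "w \<in> AV Q n" unfolding AV_def using lw wfw avw by simp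
      ultimately have "(w, p) \<in> Sigma (AV Q n) (Vs Q)" by simp
      moreover have "?g (w, p) = w'" using iw tpw by simp
      ultimately show "w' \<in> ?g ` (Sigma (AV Q n) (Vs Q))" by force
    qed
  qed
  show ?thesis using inj img unfolding bij_betw_def by simp
qed

definition Pr :: "nat \<Rightarrow> nat \<Rightarrow> int" where
  "Pr m k = (if 2 \<le> k \<and> k \<le> m + 1 then int ((2*m - k) choose (m - 1)) - int ((2*m - k) choose m) else 0)"

lemma Pr_step:
  assumes m: "1 \<le> m" and k: "2 \<le> k"
  shows "Pr (Suc m) k = Pr m (k - 1) + Pr (Suc m) (Suc k)"
proof -
  consider "m + 3 \<le> k" | "k = m + 2" | "k = 2" "k \<noteq> m + 2" | "3 \<le> k" "k \<le> m + 1" using k by linarith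
  then show ?thesis
  proof cases
    case 1 then show ?thesis unfolding Pr_def by auto
  next
    case 2
    have a: "2 * Suc m - k = m" "2 * m - (k - 1) = m - 1" using 2 by auto
    show ?thesis unfolding Pr_def using 2 m by (simp add: a binomial_eq_0)
  next
    case 3
    obtain j where j: "m = Suc j" using m by (cases m) auto
    have e1: "2 * Suc m - k = Suc (Suc (2*j))" using 3 j by simp
    have e2: "2 * Suc m - Suc k = Suc (2*j)" using 3 j by simp
    have sym: "Suc (2*j) choose j = Suc (2*j) choose Suc j"
      using binomial_symmetric[of j "Suc (2*j)"] by (simp add: Suc_diff_le)
    have p1: "Suc (Suc (2*j)) choose Suc j = (Suc (2*j) choose j) + (Suc (2*j) choose Suc j)" by simp
    have p2: "Suc (Suc (2*j)) choose Suc (Suc j) = (Suc (2*j) choose Suc j) + (Suc (2*j) choose Suc (Suc j))" by simp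
    have "Pr (Suc m) k = int (Suc (Suc (2*j)) choose Suc j) - int (Suc (Suc (2*j)) choose Suc (Suc j))"
      unfolding Pr_def using 3 j e1 by simp
    also have "\<dots> = int (Suc (2*j) choose Suc j) - int (Suc (2*j) choose Suc (Suc j))"
      unfolding p1 p2 sym by simp
    also have "\<dots> = Pr (Suc m) (Suc k)"
      unfolding Pr_def using 3 j e2 by simp
    finally show ?thesis using 3 unfolding Pr_def by simp
  next
    case 4
    obtain j where j: "m = Suc j" using m by (cases m) auto
    define N where "N = 2*m + 1 - k"
    have e1: "2 * Suc m - k = Suc N" "2 * m - (k - 1) = N" "2 * Suc m - Suc k = N" using 4 unfolding N_def by auto
    have p1: "Suc N choose Suc j = (N choose j) + (N choose Suc j)" by simp
    have p2: "Suc N choose Suc (Suc j) = (N choose Suc j) + (N choose Suc (Suc j))" by simp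
    have A: "Pr (Suc m) k = int (Suc N choose Suc j) - int (Suc N choose Suc (Suc j))"
      unfolding Pr_def using 4 j e1 by simp
    have kk: "2 \<le> k - 1" "k - 1 \<le> m + 1" using 4 by auto
    have B: "Pr m (k - 1) = int (N choose j) - int (N choose Suc j)"
      unfolding Pr_def using kk j e1 by simp
    have C: "Pr (Suc m) (Suc k) = int (N choose Suc j) - int (N choose Suc (Suc j))"
      unfolding Pr_def using 4 j e1 by simp
    show ?thesis unfolding A B C p1 p2 by simp
  qed
qed

lemma Pr_zero: "k \<le> 1 \<or> m + 1 < k \<Longrightarrow> Pr m k = 0"
  unfolding Pr_def by auto

lemma Pr_tail:
  assumes m: "1 \<le> m" and k: "2 \<le> k"
  shows "(\<Sum>j = k - 1..Suc m. Pr m j) = Pr (Suc m) k"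
proof (cases "m + 3 \<le> k")
  case True
  then show ?thesis by (simp add: Pr_zero)
next
  case False
  then have kl: "k \<le> m + 3" by simp
  have "\<forall>i. 2 \<le> i \<longrightarrow> i \<le> m + 3 \<longrightarrow> (\<Sum>j = i - 1..Suc m. Pr m j) = Pr (Suc m) i"
  proof (intro allI impI)
    fix i assume i2: "2 \<le> i" and im: "i \<le> m + 3"
    show "(\<Sum>j = i - 1..Suc m. Pr m j) = Pr (Suc m) i"
      using im i2
    proof (induction i rule: inc_induct)
      case base
      then show ?case by (simp add: Pr_zero)
    next
      case (step i)
      have "(\<Sum>j = i - 1..Suc m. Pr m j) = Pr m (i - 1) + (\<Sum>j = Suc (i - 1)..Suc m. Pr m j)"
        using step.hyps by (intro sum.atLeast_Suc_atMost) simp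
      also have "Suc (i - 1) = Suc i - 1" using step.prems by simp
      also have "(\<Sum>j = Suc i - 1..Suc m. Pr m j) = Pr (Suc m) (Suc i)"
        using step.IH step.prems by simp
      also have "Pr m (i - 1) + Pr (Suc m) (Suc i) = Pr (Suc m) i"
        using Pr_step[OF m step.prems] by simp
      finally show ?case .
    qed
  qed
  then show ?thesis using k kl by blast
qed

lemma Pr_cat: "Pr (Suc j) 2 = int (catalan j)"
proof -
  have e: "(j+1) * (2*j choose (j+1)) = j * (2*j choose j)"
  proof -
    have a: "(j+1) * (2*j choose (j+1)) = 2*j * (2*j - 1 choose j)"
      using binomial_absorption[of j "2*j"] by simp
    have b0: "(2*j - j) * (2*j choose j) = 2*j * (2*j - 1 choose j)"
      by (rule binomial_absorb_comp)
    have jj: "2*j - j = j" by simp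
    have b: "j * (2*j choose j) = 2*j * (2*j - 1 choose j)" using b0 unfolding jj .
    show ?thesis by (metis a b)
  qed
  let ?C = "2*j choose j" and ?D = "2*j choose (j+1)"
  have le: "?D \<le> ?C"
  proof -
    show ?thesis
    proof (rule ccontr)
      assume "\<not> ?D \<le> ?C"
      then have "(j+1) * ?C < (j+1) * ?D" by (intro mult_less_mono2) auto
      moreover have "j * ?C \<le> (j+1) * ?C" by simp
      ultimately show False using e by linarith
    qed
  qed
  have "?C = (j+1) * (?C - ?D)"
    using e le by (simp add: diff_mult_distrib2 algebra_simps)
  then have "catalan j = ?C - ?D" unfolding catalan_def by (metis nonzero_mult_div_cancel_left add_eq_0_iff_both_eq_0 one_neq_zero)
  moreover have "Pr (Suc j) 2 = int ?C - int ?D" unfolding Pr_def by simp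
  ultimately show ?thesis using le by simp
qed

definition Dd :: "nat \<Rightarrow> nat \<Rightarrow> int" where
  "Dd n j = (if 2 \<le> j \<and> j \<le> n then int (j - 1) * 2 ^ (n - j) else if j = n + 1 then -1
      else if j = n + 2 then int (n + 1) else if j = n + 3 then 1 else 0)"

definition TDc :: "nat \<Rightarrow> nat \<Rightarrow> int" where
  "TDc n i = (if 1 \<le> i \<and> i \<le> n + 1 then int i * 2 ^ (n + 1 - i) else if i = n + 2 then int (n + 2)
      else if i = n + 3 then 1 else 0)"

lemma TD_step: "1 \<le> i \<Longrightarrow> i \<le> n + 3 \<Longrightarrow> Dd n i + TDc n (Suc i) = TDc n i"
proof -
  assume i1: "1 \<le> i" and i3: "i \<le> n + 3"
  consider "i = n + 3" | "i = n + 2" | "i = n + 1" | "i = 1" "1 \<le> n" | "2 \<le> i" "i \<le> n" using i1 i3 by linarith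
  then show ?thesis
  proof cases
    case 4
    obtain d where d: "n = Suc d" using 4 by (cases n) auto
    show ?thesis unfolding Dd_def TDc_def using 4 d by simp
  next
    case 5
    obtain d where d: "n - i = d" by simp
    have e1: "n + 1 - i = Suc d" "n - i = d" "n + 1 - Suc i = d" using 5 d by auto
    have "int (i - 1) + int (Suc i) = 2 * int i" using 5 by simp
    then show ?thesis unfolding Dd_def TDc_def using 5 e1 by (simp add: algebra_simps)
  qed (auto simp: Dd_def TDc_def)
qed

lemma TD_sum: "1 \<le> i \<Longrightarrow> (\<Sum>j = i..n + 3. Dd n j) = TDc n i"
proof -
  assume i1: "1 \<le> i"
  show ?thesis
  proof (cases "i \<le> n + 4")
    case False then show ?thesis unfolding TDc_def by simp
  next
    case True
    show ?thesis using True i1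
    proof (induction i rule: inc_induct)
      case base then show ?case unfolding TDc_def by simp
    next
      case (step i)
      have "(\<Sum>j = i..n + 3. Dd n j) = Dd n i + (\<Sum>j = Suc i..n + 3. Dd n j)"
        using step.hyps by (intro sum.atLeast_Suc_atMost) simp
      also have "\<dots> = Dd n i + TDc n (Suc i)" using step.IH step.prems by simp
      also have "\<dots> = TDc n i" using TD_step step.prems step.hyps by simp
      finally show ?case .
    qed
  qed
qed

definition Gn :: "nat \<Rightarrow> nat \<Rightarrow> nat" where
  "Gn m k = (if m = 0 then (if k = 1 then 1 else 0) else if k = m + 1 then m + 1
     else if 2 \<le> k \<and> k \<le> m then (k - 1) * 2 ^ (m - k) else 0)"

definition Ee :: "nat \<Rightarrow> nat \<Rightarrow> nat" where
  "Ee m i = (if i < m then 2 ^ (m - i - 1) else if i = m then 1 else 0)"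

lemma GTD: "2 \<le> k \<Longrightarrow> int (Gn (Suc n) k) + Dd (Suc n) k = TDc n (k - 1)"
proof -
  assume k: "2 \<le> k"
  consider "k \<le> n + 1" | "k = n + 2" | "k = n + 3" | "k = n + 4" | "n + 5 \<le> k" using k by linarith
  then show ?thesis
  proof cases
    case 1
    obtain d where d: "n + 1 - k = d" by simp
    have e: "Suc n - k = d" "n + 1 - (k - 1) = Suc d" using 1 d k by auto
    have G: "int (Gn (Suc n) k) = int (k-1) * 2^d" unfolding Gn_def using 1 k e by auto
    have D: "Dd (Suc n) k = int (k-1) * 2^d" unfolding Dd_def using 1 k e by auto
    have T: "TDc n (k - 1) = int (k-1) * 2^(Suc d)" unfolding TDc_def using 1 k e by auto
    show ?thesis unfolding G D T by simp
  qed (auto simp: Gn_def Dd_def TDc_def)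
qed

lemma Gn_rec: "Gn (Suc m) k = (if 1 \<le> k then Gn m (k - 1) else 0) + (if 2 \<le> k then Ee m (k - 2) else 0)"
proof (cases "m = 0")
  case True
  then show ?thesis unfolding Gn_def Ee_def by auto
next
  case False
  consider "k = m + 2" | "k = m + 1" | "2 \<le> k" "k \<le> m" | "k \<le> 1" | "m + 3 \<le> k" by linarith
  then show ?thesis
  proof cases
    case 2
    then show ?thesis unfolding Gn_def Ee_def using False by (cases "m = 1") (auto simp: diff_mult_distrib)
  next
    case 3
    obtain d where d: "m - k = d" by simp
    have e: "Suc m - k = Suc d" "m - (k - 2) - 1 = Suc d" "m - (k - 1) = Suc d" using 3 d by auto
    show ?thesis unfolding Gn_def Ee_def using 3 False e
      by (cases "k = 2") (auto simp: algebra_simps)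
  qed (use False in \<open>auto simp: Gn_def Ee_def\<close>)
qed

lemma NO_wf: "u \<in> NO m \<Longrightarrow> wfw u \<and> posset u = {}"
proof -
  assume u: "u \<in> NO m"
  then have su: "set u \<subseteq> {-1,-2}" unfolding NO_def by simp
  have p: "posset u = {}" using su unfolding posset_def by auto
  have "\<forall>i<length u. \<not> 0 < u!i"
  proof (intro allI impI)
    fix i assume "i < length u"
    then have "u!i \<in> set u" by simp
    then show "\<not> 0 < u!i" using su by auto
  qed
  then show ?thesis unfolding wfw_def using su p by auto
qed

lemma NO_av:
  assumes Qd: "\<And>x y z. Q x y z \<Longrightarrow> x \<noteq> y \<and> y \<noteq> z \<and> x \<noteq> z"
    and u: "set u \<subseteq> {-1,-2}"
  shows "avP Q u"
  unfolding avP_def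
proof
  assume "\<exists>i j k. i < j \<and> j < k \<and> k < length u \<and> Q (u!i) (u!j) (u!k)"
  then obtain i j k where o: "i < j" "j < k" "k < length u" "Q (u!i) (u!j) (u!k)" by blast
  have "u!i \<in> {-1,-2}" "u!j \<in> {-1,-2}" "u!k \<in> {-1,-2}" using o u nth_mem[of _ u] by (auto simp: subset_iff)
  then show False using Qd[OF o(4)] by auto
qed

lemma AV_nopos: "w \<in> AV Q m \<Longrightarrow> posset w = {} \<Longrightarrow> w \<in> NO m"
  unfolding AV_def NO_def wfw_def posset_def by auto

lemma NO_sub_AV:
  assumes Qd: "\<And>x y z. Q x y z \<Longrightarrow> x \<noteq> y \<and> y \<noteq> z \<and> x \<noteq> z"
  shows "NO m \<subseteq> AV Q m"
  using NO_wf NO_av[OF Qd] unfolding AV_def NO_def by auto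

lemma finite_NO: "finite (NO m)"
proof -
  have "NO m = {xs. set xs \<subseteq> {-1,-2} \<and> length xs = m}" unfolding NO_def by auto
  then show ?thesis by (simp add: finite_lists_length_eq)
qed

lemma split_card:
  assumes Qd: "\<And>x y z. Q x y z \<Longrightarrow> x \<noteq> y \<and> y \<noteq> z \<and> x \<noteq> z"
  shows "card {w\<in>AV Q m. act Q w = k} = card {u\<in>NO m. act Q u = k} + card {w'\<in>AV Q m. posset w' \<noteq> {} \<and> act Q w' = k}"
proof -
  have "{w\<in>AV Q m. act Q w = k} = {u\<in>NO m. act Q u = k} \<union> {w'\<in>AV Q m. posset w' \<noteq> {} \<and> act Q w' = k}"
    using NO_sub_AV[of Q m, OF Qd] AV_nopos[of _ Q m] NO_wf by blast
  moreover have "{u\<in>NO m. act Q u = k} \<inter> {w'\<in>AV Q m. posset w' \<noteq> {} \<and> act Q w' = k} = {}"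
    using NO_wf by blast
  moreover have "finite {u\<in>NO m. act Q u = k}" using finite_NO by simp
  moreover have "finite {w'\<in>AV Q m. posset w' \<noteq> {} \<and> act Q w' = k}" using finite_AV[of Q m] by simp
  ultimately show ?thesis by (simp add: card_Un_disjoint)
qed

lemma fiber:
  assumes V: "finite V" and inj: "inj_on f V" and im: "f ` V \<subseteq> {2..card V + 1}"
  shows "card {s\<in>V. f s = k} = (if 2 \<le> k \<and> k \<le> card V + 1 then 1 else 0)"
proof -
  have "card (f ` V) = card V" using card_image[OF inj] .
  also have "\<dots> = card {2..card V + 1}" by simp
  finally have im2: "f ` V = {2..card V + 1}" using im by (intro card_subset_eq) auto
  show ?thesis
  proof (cases "2 \<le> k \<and> k \<le> card V + 1")
    case True
    then obtain s where s: "s \<in> V" "f s = k" using im2 by (metis atLeastAtMost_iff imageE)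
    have "{s\<in>V. f s = k} = {s}" using s inj unfolding inj_on_def by auto
    then show ?thesis using True by simp
  next
    case False
    then have e: "{s\<in>V. f s = k} = {}" using im by auto
    show ?thesis unfolding e using False by simp
  qed
qed

lemma count_step:
  "card {w'\<in>AV Q (Suc n). posset w' \<noteq> {} \<and> act Q w' = k}
     = (\<Sum>w\<in>AV Q n. card {s\<in>Vs Q w. act Q (ins w s (tp w)) = k})"
proof -
  let ?g = "\<lambda>(w,s). ins w s (tp w)"
  let ?S = "Sigma (AV Q n) (Vs Q)"
  let ?A = "Sigma (AV Q n) (\<lambda>w. {s\<in>Vs Q w. act Q (ins w s (tp w)) = k})"
  have b: "bij_betw ?g ?S {w'\<in>AV Q (Suc n). posset w' \<noteq> {}}" by (rule tree_bij)
  have sub: "?A \<subseteq> ?S" by auto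
  have "?g ` ?A = {w'\<in>AV Q (Suc n). posset w' \<noteq> {} \<and> act Q w' = k}"
  proof
    show "?g ` ?A \<subseteq> {w'\<in>AV Q (Suc n). posset w' \<noteq> {} \<and> act Q w' = k}"
      using b sub unfolding bij_betw_def by force
  next
    show "{w'\<in>AV Q (Suc n). posset w' \<noteq> {} \<and> act Q w' = k} \<subseteq> ?g ` ?A"
    proof
      fix w' assume w': "w' \<in> {w'\<in>AV Q (Suc n). posset w' \<noteq> {} \<and> act Q w' = k}"
      then have "w' \<in> ?g ` ?S" using b unfolding bij_betw_def by auto
      then obtain w s where p: "(w,s) \<in> ?S" and e: "w' = ins w s (tp w)" by auto
      then have "(w,s) \<in> ?A" using w' by auto
      then show "w' \<in> ?g ` ?A" using e by force
    qed
  qed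
  then have "card {w'\<in>AV Q (Suc n). posset w' \<noteq> {} \<and> act Q w' = k} = card (?g ` ?A)" by simp
  also have "\<dots> = card ?A"
  proof -
    have inj: "inj_on ?g ?S" using b unfolding bij_betw_def by blast
    show ?thesis by (rule card_image[OF inj_on_subset[OF inj sub]])
  qed
  also have "\<dots> = (\<Sum>w\<in>AV Q n. card {s\<in>Vs Q w. act Q (ins w s (tp w)) = k})"
    using finite_AV by (intro card_SigmaI) auto
  finally show ?thesis .
qed

lemma sum_ind: "finite A \<Longrightarrow> (\<Sum>x\<in>A. (if P x then 1 else 0::nat)) = card {x\<in>A. P x}"
  by (simp add: sum.If_cases Int_def conj_commute)

lemma rec_main:
  assumes Qd: "\<And>x y z. Q x y z \<Longrightarrow> x \<noteq> y \<and> y \<noteq> z \<and> x \<noteq> z"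
    and H2: "\<And>w. w \<in> AV Q n \<Longrightarrow> inj_on (\<lambda>s. act Q (ins w s (tp w))) (Vs Q w)
         \<and> (\<lambda>s. act Q (ins w s (tp w))) ` Vs Q w \<subseteq> {2..act Q w + 1}"
  shows "card {w\<in>AV Q (Suc n). act Q w = k} = card {u\<in>NO (Suc n). act Q u = k}
           + card {w\<in>AV Q n. 2 \<le> k \<and> k \<le> act Q w + 1}"
proof -
  have "card {w'\<in>AV Q (Suc n). posset w' \<noteq> {} \<and> act Q w' = k}
     = (\<Sum>w\<in>AV Q n. card {s\<in>Vs Q w. act Q (ins w s (tp w)) = k})" by (rule count_step)
  also have "\<dots> = (\<Sum>w\<in>AV Q n. (if 2 \<le> k \<and> k \<le> act Q w + 1 then 1 else 0))"
  proof (rule sum.cong)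
    fix w assume "w \<in> AV Q n"
    then show "card {s\<in>Vs Q w. act Q (ins w s (tp w)) = k} = (if 2 \<le> k \<and> k \<le> act Q w + 1 then 1 else 0)"
      using fiber[OF finite_Vs, of "\<lambda>s. act Q (ins w s (tp w))" Q w k] H2 unfolding act_def by simp
  qed simp
  also have "\<dots> = card {w\<in>AV Q n. 2 \<le> k \<and> k \<le> act Q w + 1}" by (rule sum_ind[OF finite_AV])
  finally show ?thesis using split_card[of Q "Suc n" k, OF Qd] by simp
qed

lemma card_fibers:
  fixes f :: "'a \<Rightarrow> nat"
  assumes A: "finite A" and b: "\<And>x. x \<in> A \<Longrightarrow> f x \<le> N"
  shows "card {x\<in>A. i \<le> f x} = (\<Sum>j = i..N. card {x\<in>A. f x = j})"
proof -
  have "{x\<in>A. i \<le> f x} = (\<Union>j\<in>{i..N}. {x\<in>A. f x = j})" using b by auto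
  moreover have "card (\<Union>j\<in>{i..N}. {x\<in>A. f x = j}) = (\<Sum>j = i..N. card {x\<in>A. f x = j})"
    using A by (intro card_UN_disjoint) auto
  ultimately show ?thesis by simp
qed

lemma AV0: "AV Q 0 = {[]}"
  unfolding AV_def wfw_def avP_def posset_def by auto

lemma act_nil: "act Q [] = 1"
proof -
  have "Vs Q [] = {0}" unfolding Vs_def avP_def ins_def by auto
  then show ?thesis unfolding act_def by simp
qed

lemma base_num: "int (if k = 1 then 1 else 0) = Pr 2 k - Dd 0 k"
proof -
  consider "k = 0" | "k = 1" | "k = 2" | "k = 3" | "4 \<le> k" by linarith
  then show ?thesis by cases (auto simp: Pr_def Dd_def)
qed

theorem main_count:
  assumes Qd: "\<And>x y z. Q x y z \<Longrightarrow> x \<noteq> y \<and> y \<noteq> z \<and> x \<noteq> z"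
    and H2: "\<And>n w. w \<in> AV Q n \<Longrightarrow> inj_on (\<lambda>s. act Q (ins w s (tp w))) (Vs Q w)
         \<and> (\<lambda>s. act Q (ins w s (tp w))) ` Vs Q w \<subseteq> {2..act Q w + 1}"
    and H3: "\<And>m k. card {u\<in>NO m. act Q u = k} = Gn m k"
    and n1: "1 \<le> n"
  shows "int (card (AV Q n)) = int (catalan (n+2)) - 2^n"
proof -
  define cnt where "cnt n k = card {w\<in>AV Q n. act Q w = k}" for n k
  have claim: "\<forall>k. int (cnt n k) = Pr (n+2) k - Dd n k" for n
  proof (induction n)
    case 0
    show ?case
    proof
      fix k
      have "{w\<in>AV Q 0. act Q w = k} = (if k = 1 then {[]} else {})" unfolding AV0 using act_nil by auto
      then have "cnt 0 k = (if k = 1 then 1 else 0)" unfolding cnt_def by simp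
      then show "int (cnt 0 k) = Pr (0+2) k - Dd 0 k" using base_num[of k] by (simp add: numeral_2_eq_2)
    qed
  next
    case (Suc n)
    show ?case
    proof
      fix k
      have r: "cnt (Suc n) k = Gn (Suc n) k + card {w\<in>AV Q n. 2 \<le> k \<and> k \<le> act Q w + 1}"
        unfolding cnt_def using rec_main[OF Qd H2] H3 by simp
      show "int (cnt (Suc n) k) = Pr (Suc n + 2) k - Dd (Suc n) k"
      proof (cases "2 \<le> k")
        case False
        then have "cnt (Suc n) k = Gn (Suc n) k" using r by simp
        moreover have "Gn (Suc n) k = 0" using False unfolding Gn_def by auto
        ultimately show ?thesis using False unfolding Pr_def Dd_def by auto
      next
        case True
        have "{w\<in>AV Q n. 2 \<le> k \<and> k \<le> act Q w + 1} = {w\<in>AV Q n. k - 1 \<le> act Q w}" using True by auto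
        also have "card \<dots> = (\<Sum>j = k - 1..n + 3. cnt n j)"
          unfolding cnt_def
          by (rule card_fibers[OF finite_AV]) (auto simp: AV_def intro: le_trans[OF act_le])
        finally have "int (cnt (Suc n) k) = int (Gn (Suc n) k) + (\<Sum>j = k - 1..n + 3. int (cnt n j))"
          using r by simp
        also have "\<dots> = int (Gn (Suc n) k) + (\<Sum>j = k - 1..n + 3. (Pr (n+2) j - Dd n j))"
          using Suc.IH by simp
        also have "\<dots> = int (Gn (Suc n) k) + ((\<Sum>j = k - 1..n + 3. Pr (n+2) j) - (\<Sum>j = k - 1..n + 3. Dd n j))"
          by (simp only: sum_subtractf)
        also have "(\<Sum>j = k - 1..n + 3. Pr (n+2) j) = Pr (Suc (n+2)) k"
        proof -
          have e3: "n + 3 = Suc (n + 2)" by simp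
          show ?thesis unfolding e3 by (rule Pr_tail) (use True in auto)
        qed
        also have "(\<Sum>j = k - 1..n + 3. Dd n j) = TDc n (k - 1)"
          using TD_sum[of "k-1" n] True by simp
        also have "int (Gn (Suc n) k) + (Pr (Suc (n+2)) k - TDc n (k - 1)) = Pr (Suc n + 2) k - Dd (Suc n) k"
          using GTD[OF True, of n] by simp
        finally show ?thesis .
      qed
    qed
  qed
  have "int (cnt n 0) = Pr (n+2) 0 - Dd n 0" using claim by blast
  then have c0: "cnt n 0 = 0" by (simp add: Pr_def Dd_def)
  have "card (AV Q n) = card {w\<in>AV Q n. 0 = act Q w} + card {w\<in>AV Q n. 1 \<le> act Q w}"
  proof -
    have "AV Q n = {w\<in>AV Q n. 0 = act Q w} \<union> {w\<in>AV Q n. 1 \<le> act Q w}" by auto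
    moreover have "{w\<in>AV Q n. 0 = act Q w} \<inter> {w\<in>AV Q n. 1 \<le> act Q w} = {}" by auto
    ultimately show ?thesis using finite_AV[of Q n] by (metis (no_types, lifting) card_Un_disjoint finite_Un)
  qed
  also have "card {w\<in>AV Q n. 0 = act Q w} = 0" 
  proof -
    have "{w\<in>AV Q n. 0 = act Q w} = {w\<in>AV Q n. act Q w = 0}" by auto
    then show ?thesis using c0 unfolding cnt_def by simp
  qed
  also have "{w\<in>AV Q n. 1 \<le> act Q w} = {w\<in>AV Q n. 2 \<le> (2::nat) \<and> 2 \<le> act Q w + 1}" by auto
  finally have "card (AV Q n) = cnt (Suc n) 2 - Gn (Suc n) 2"
    unfolding cnt_def using rec_main[of Q n 2, OF Qd H2] H3 by simp
  moreover have "Gn (Suc n) 2 \<le> cnt (Suc n) 2"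
    unfolding cnt_def using rec_main[of Q n 2, OF Qd H2] H3 by simp
  ultimately have "int (card (AV Q n)) = int (cnt (Suc n) 2) - int (Gn (Suc n) 2)" by simp
  also have "\<dots> = Pr (Suc (n + 2)) 2 - Dd (Suc n) 2 - int (Gn (Suc n) 2)"
  proof -
    have "int (cnt (Suc n) 2) = Pr (Suc n + 2) 2 - Dd (Suc n) 2" using claim by blast
    then show ?thesis by simp
  qed
  also have "\<dots> = int (catalan (n+2)) - 2^n"
  proof -
    obtain d where d: "n = Suc d" using n1 by (cases n) auto
    have "Pr (Suc (n + 2)) 2 = int (catalan (n+2))" using Pr_cat[of "n+2"] by simp
    moreover have "Dd (Suc n) 2 = 2^d" unfolding Dd_def using d by simp
    moreover have "int (Gn (Suc n) 2) = 2^d" unfolding Gn_def using d by simp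
    ultimately show ?thesis using d by simp
  qed
  finally show ?thesis .
qed

lemma nth_lt_tp: "wfw w \<Longrightarrow> i < length w \<Longrightarrow> w!i < tp w"
  using top_gt nth_mem by blast

lemma Vs_char:
  assumes "wfw w" "avP Q w"
  shows "Vs Q w = {s. s \<le> length w
     \<and> \<not> (\<exists>i j. i < j \<and> j < s \<and> Q (w!i) (w!j) (tp w))
     \<and> \<not> (\<exists>i j. i < s \<and> s \<le> j \<and> j < length w \<and> Q (w!i) (tp w) (w!j))
     \<and> \<not> (\<exists>i j. s \<le> i \<and> i < j \<and> j < length w \<and> Q (tp w) (w!i) (w!j))}"
  unfolding Vs_def using ins_char assms by auto

lemma card_ins0: "card (insert 0 (Suc ` A)) = Suc (card A)" if "finite A"
proof -
  have "0 \<notin> Suc ` A" by auto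
  then show ?thesis using that by (simp add: card_image)
qed

lemma ins0: "ins w 0 x = x # w" unfolding ins_def by simp

lemma AV_ins: "w \<in> AV Q n \<Longrightarrow> s \<in> Vs Q w \<Longrightarrow> ins w s (tp w) \<in> AV Q (Suc n)"
  unfolding AV_def Vs_def using wf_ins by auto

definition pok :: "(int \<Rightarrow> int \<Rightarrow> bool) \<Rightarrow> int list \<Rightarrow> nat \<Rightarrow> bool" where
  "pok R w t \<longleftrightarrow> \<not> (\<exists>i j. i < j \<and> j < t \<and> R (w!i) (w!j))"

lemma pok_0[simp]: "pok R w 0" unfolding pok_def by simp

lemma pok_mono: "pok R w t \<Longrightarrow> t' \<le> t \<Longrightarrow> pok R w t'"
  unfolding pok_def by (meson less_le_trans)

lemma pok_ins_le: "s \<le> length w \<Longrightarrow> t \<le> s \<Longrightarrow> pok R (ins w s x) t \<longleftrightarrow> pok R w t"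
  unfolding pok_def by (auto simp: nth_ins)

lemma pok_Cons: "pok R (x # w) (Suc t) \<longleftrightarrow> \<not> (\<exists>j<t. R x (w!j)) \<and> pok R w t"
proof
  assume a: "pok R (x # w) (Suc t)"
  have "\<not> (\<exists>j<t. R x (w!j))"
  proof
    assume "\<exists>j<t. R x (w!j)"
    then obtain j where "j < t" "R x (w!j)" by blast
    then have "0 < Suc j" "Suc j < Suc t" "R ((x#w)!0) ((x#w)!Suc j)" by auto
    then show False using a unfolding pok_def by blast
  qed
  moreover have "pok R w t"
    unfolding pok_def
  proof
    assume "\<exists>i j. i < j \<and> j < t \<and> R (w!i) (w!j)"
    then obtain i j where "i < j" "j < t" "R (w!i) (w!j)" by blast
    then have "Suc i < Suc j" "Suc j < Suc t" "R ((x#w)!Suc i) ((x#w)!Suc j)" by auto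
    then show False using a unfolding pok_def by blast
  qed
  ultimately show "\<not> (\<exists>j<t. R x (w!j)) \<and> pok R w t" by blast
next
  assume b: "\<not> (\<exists>j<t. R x (w!j)) \<and> pok R w t"
  show "pok R (x # w) (Suc t)"
    unfolding pok_def
  proof
    assume "\<exists>i j. i < j \<and> j < Suc t \<and> R ((x#w)!i) ((x#w)!j)"
    then obtain i j where o: "i < j" "j < Suc t" "R ((x#w)!i) ((x#w)!j)" by blast
    obtain j' where j': "j = Suc j'" using o by (cases j) auto
    show False
    proof (cases i)
      case 0
      then show False using b o j' by auto
    next
      case (Suc i')
      then show False using b o j' unfolding pok_def by auto
    qed
  qed
qed

lemma NO0: "NO 0 = {[]}"
proof
  show "NO 0 \<subseteq> {[]}" unfolding NO_def by auto
  show "{[]} \<subseteq> NO 0" unfolding NO_def by simp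
qed

lemma sing_filter: "{u\<in>{a}. P u} = (if P a then {a} else {})" by auto

fun lrun :: "int \<Rightarrow> int list \<Rightarrow> nat" where
  "lrun c [] = 0"
| "lrun c (x # xs) = (if x = c then Suc (lrun c xs) else 0)"

lemma lrun_le: "lrun c u \<le> length u"
  by (induction u) auto

lemma lrun_iff: "t \<le> length u \<Longrightarrow> (\<forall>j<t. u!j = c) \<longleftrightarrow> t \<le> lrun c u"
proof (induction u arbitrary: t)
  case Nil then show ?case by simp
next
  case (Cons x u)
  show ?case
  proof (cases t)
    case 0 then show ?thesis by simp
  next
    case (Suc t')
    have "(\<forall>j<t. (x#u)!j = c) \<longleftrightarrow> x = c \<and> (\<forall>j<t'. u!j = c)"
      unfolding Suc by (auto simp: less_Suc_eq_0_disj)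
    then show ?thesis using Cons Suc by auto
  qed
qed

lemma card_NO: "card (NO m) = 2 ^ m"
proof -
  have "NO m = {xs. set xs \<subseteq> {-1,-2} \<and> length xs = m}" unfolding NO_def by auto
  then show ?thesis by (simp add: card_lists_length_eq numeral_2_eq_2)
qed

lemma NO_Cons_dec:
  "card {v\<in>NO (Suc m). P v} = card {u\<in>NO m. P (-1 # u)} + card {u\<in>NO m. P (-2 # u)}"
proof -
  have "{v\<in>NO (Suc m). P v} = (Cons (-1)) ` {u\<in>NO m. P (-1 # u)} \<union> (Cons (-2)) ` {u\<in>NO m. P (-2 # u)}"
  proof
    show "{v\<in>NO (Suc m). P v} \<subseteq> (Cons (-1)) ` {u\<in>NO m. P (-1 # u)} \<union> (Cons (-2)) ` {u\<in>NO m. P (-2 # u)}"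
    proof
      fix v assume v: "v \<in> {v\<in>NO (Suc m). P v}"
      then obtain x u where xu: "v = x # u" unfolding NO_def by (cases v) auto
      have "x \<in> {-1,-2}" "u \<in> NO m" using v xu unfolding NO_def by auto
      then show "v \<in> (Cons (-1)) ` {u\<in>NO m. P (-1 # u)} \<union> (Cons (-2)) ` {u\<in>NO m. P (-2 # u)}"
        using v xu by auto
    qed
  next
    show "(Cons (-1)) ` {u\<in>NO m. P (-1 # u)} \<union> (Cons (-2)) ` {u\<in>NO m. P (-2 # u)} \<subseteq> {v\<in>NO (Suc m). P v}"
      unfolding NO_def by auto
  qed
  moreover have "(Cons (-1)) ` {u\<in>NO m. P (-1 # u)} \<inter> (Cons (-2)) ` {u\<in>NO m. P (-2 # u)} = {}" by auto
  moreover have "finite {u\<in>NO m. P (-1 # u)}" "finite {u\<in>NO m. P (-2 # u)}" using finite_NO by auto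
  ultimately show ?thesis by (simp add: card_Un_disjoint card_image)
qed

lemma NO_snoc_dec:
  "card {v\<in>NO (Suc m). P v} = card {u\<in>NO m. P (u @ [-2])} + card {u\<in>NO m. P (u @ [-1])}"
proof -
  have inj: "inj (\<lambda>u. u @ [x])" for x :: int by (auto intro: injI)
  have "{v\<in>NO (Suc m). P v} = (\<lambda>u. u @ [-2]) ` {u\<in>NO m. P (u @ [-2])} \<union> (\<lambda>u. u @ [-1]) ` {u\<in>NO m. P (u @ [-1])}"
  proof
    show "{v\<in>NO (Suc m). P v} \<subseteq> (\<lambda>u. u @ [-2]) ` {u\<in>NO m. P (u @ [-2])} \<union> (\<lambda>u. u @ [-1]) ` {u\<in>NO m. P (u @ [-1])}"
    proof
      fix v assume v: "v \<in> {v\<in>NO (Suc m). P v}"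
      then obtain x u where xu: "v = u @ [x]" unfolding NO_def by (cases v rule: rev_cases) auto
      have "x \<in> {-1,-2}" "u \<in> NO m" using v xu unfolding NO_def by auto
      then show "v \<in> (\<lambda>u. u @ [-2]) ` {u\<in>NO m. P (u @ [-2])} \<union> (\<lambda>u. u @ [-1]) ` {u\<in>NO m. P (u @ [-1])}"
        using v xu by auto
    qed
  next
    show "(\<lambda>u. u @ [-2]) ` {u\<in>NO m. P (u @ [-2])} \<union> (\<lambda>u. u @ [-1]) ` {u\<in>NO m. P (u @ [-1])} \<subseteq> {v\<in>NO (Suc m). P v}"
      unfolding NO_def by auto
  qed
  moreover have "(\<lambda>u. u @ [-2]) ` {u\<in>NO m. P (u @ [-2])} \<inter> (\<lambda>u. u @ [-1]) ` {u\<in>NO m. P (u @ [-1])} = {}" by auto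
  moreover have "finite {u\<in>NO m. P (u @ [-2])}" "finite {u\<in>NO m. P (u @ [-1])}" using finite_NO by auto
  ultimately show ?thesis using inj by (simp add: card_Un_disjoint card_image inj_on_def)
qed

lemma lrun_count:
  assumes c: "c = -1 \<or> c = -2"
  shows "card {u\<in>NO m. lrun c u = i} = Ee m i"
proof (induction m arbitrary: i)
  case 0
  have "{u\<in>NO 0. lrun c u = i} = (if i = 0 then {[]} else {})" unfolding NO0 sing_filter by simp
  then show ?case unfolding Ee_def by simp
next
  case (Suc m)
  have d: "card {v\<in>NO (Suc m). lrun c v = i} = card {u\<in>NO m. lrun c (-1 # u) = i} + card {u\<in>NO m. lrun c (-2 # u) = i}"
    by (rule NO_Cons_dec)
  have "card {u\<in>NO m. lrun c (-1 # u) = i} + card {u\<in>NO m. lrun c (-2 # u) = i}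
      = card {u\<in>NO m. Suc (lrun c u) = i} + card {u\<in>NO m. 0 = i}"
  proof (cases "c = -1")
    case True
    have "{u\<in>NO m. lrun c (-1 # u) = i} = {u\<in>NO m. Suc (lrun c u) = i}" using True by simp
    moreover have "{u\<in>NO m. lrun c (-2 # u) = i} = {u\<in>NO m. 0 = i}" using True by simp
    ultimately show ?thesis by simp
  next
    case False
    then have F: "c = -2" using c by simp
    have "{u\<in>NO m. lrun c (-2 # u) = i} = {u\<in>NO m. Suc (lrun c u) = i}" using F by simp
    moreover have "{u\<in>NO m. lrun c (-1 # u) = i} = {u\<in>NO m. 0 = i}" using F by simp
    ultimately show ?thesis by simp
  qed
  also have "\<dots> = (if i = 0 then 0 else Ee m (i - 1)) + (if i = 0 then 2 ^ m else 0)"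
  proof (cases i)
    case 0 then show ?thesis using card_NO by simp
  next
    case (Suc i')
    then show ?thesis using Suc.IH[of i'] by simp
  qed
  also have "\<dots> = Ee (Suc m) i" unfolding Ee_def by (cases i) auto
  finally show ?case using d by simp
qed

lemma H3_from:
  assumes dec: "\<And>m P. card {v\<in>NO (Suc m). P v} = card {u\<in>NO m. P (ea u)} + card {u\<in>NO m. P (eb u)}"
    and A1: "\<And>m u. u \<in> NO m \<Longrightarrow> act Q (ea u) = Suc (act Q u)"
    and A2: "\<And>m u. u \<in> NO m \<Longrightarrow> act Q (eb u) = Suc (Suc (lrun c u))"
    and c: "c = -1 \<or> c = -2"
  shows "card {u\<in>NO m. act Q u = k} = Gn m k"
proof (induction m arbitrary: k)
  case 0
  have "{u\<in>NO 0. act Q u = k} = (if k = 1 then {[]} else {})" unfolding NO0 sing_filter using act_nil by auto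
  then show ?case unfolding Gn_def by simp
next
  case (Suc m)
  have "card {v\<in>NO (Suc m). act Q v = k} = card {u\<in>NO m. act Q (ea u) = k} + card {u\<in>NO m. act Q (eb u) = k}"
    by (rule dec)
  also have "{u\<in>NO m. act Q (ea u) = k} = {u\<in>NO m. Suc (act Q u) = k}" using A1 by auto
  also have "{u\<in>NO m. act Q (eb u) = k} = {u\<in>NO m. Suc (Suc (lrun c u)) = k}" using A2 by auto
  also have "card {u\<in>NO m. Suc (act Q u) = k} = (if 1 \<le> k then Gn m (k - 1) else 0)"
  proof (cases k)
    case 0 then show ?thesis by simp
  next
    case (Suc k')
    then show ?thesis using Suc.IH[of k'] by simp
  qed
  also have "card {u\<in>NO m. Suc (Suc (lrun c u)) = k} = (if 2 \<le> k then Ee m (k - 2) else 0)"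
  proof (cases "2 \<le> k")
    case True
    then have "{u\<in>NO m. Suc (Suc (lrun c u)) = k} = {u\<in>NO m. lrun c u = k - 2}" by auto
    then show ?thesis using True lrun_count[OF c] by simp
  next
    case False
    then show ?thesis by auto
  qed
  finally show ?case using Gn_rec[of m k] by simp
qed

lemma inj_range_from:
  assumes V: "finite V" and inj: "inj_on f V" and r: "\<And>s. s \<in> V \<Longrightarrow> 2 \<le> f s \<and> f s \<le> card V + 1"
  shows "inj_on f V \<and> f ` V \<subseteq> {2..card V + 1}"
  using inj r by auto

definition Q123 :: "int \<Rightarrow> int \<Rightarrow> int \<Rightarrow> bool" where
  "Q123 x y z \<longleftrightarrow> x < y \<and> y < z"

lemma Q123_d: "Q123 x y z \<Longrightarrow> x \<noteq> y \<and> y \<noteq> z \<and> x \<noteq> z"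
  unfolding Q123_def by auto

lemma NO_nth: "u \<in> NO m \<Longrightarrow> j < m \<Longrightarrow> u!j = -1 \<or> u!j = -2"
proof -
  assume u: "u \<in> NO m" and j: "j < m"
  then have "u!j \<in> set u" unfolding NO_def by simp
  then show ?thesis using u unfolding NO_def by auto
qed

lemma V123: "w \<in> AV Q123 n \<Longrightarrow> Vs Q123 w = {s. s \<le> length w \<and> pok (<) w s}"
proof -
  assume wA: "w \<in> AV Q123 n"
  then have w: "wfw w" "avP Q123 w" unfolding AV_def by auto
  have lt: "\<And>i. i < length w \<Longrightarrow> w!i < tp w" using nth_lt_tp[OF w(1)] by blast
  show ?thesis
  proof (rule set_eqI)
    fix s
    show "s \<in> Vs Q123 w \<longleftrightarrow> s \<in> {s. s \<le> length w \<and> pok (<) w s}"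
    proof
      assume "s \<in> Vs Q123 w"
      then show "s \<in> {s. s \<le> length w \<and> pok (<) w s}"
        unfolding Vs_char[OF w] pok_def Q123_def using lt by fastforce
    next
      assume a: "s \<in> {s. s \<le> length w \<and> pok (<) w s}"
      have "\<not> (\<exists>i j. i < s \<and> s \<le> j \<and> j < length w \<and> w!i < tp w \<and> tp w < w!j)" using lt by fastforce
      moreover have "\<not> (\<exists>i j. s \<le> i \<and> i < j \<and> j < length w \<and> tp w < w!i \<and> w!i < w!j)" using lt by fastforce
      ultimately show "s \<in> Vs Q123 w"
        unfolding Vs_char[OF w] Q123_def using a unfolding pok_def by auto
    qed
  qed
qed

lemma act123:
  assumes wA: "w \<in> AV Q123 n" and sV: "s \<in> Vs Q123 w"
  shows "act Q123 (ins w s (tp w)) = (if s = 0 then Suc (act Q123 w) else Suc s)"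
proof -
  let ?x = "tp w"
  let ?w = "ins w s ?x"
  have w: "wfw w" "length w = n" using wA unfolding AV_def by auto
  have lt: "\<And>i. i < length w \<Longrightarrow> w!i < ?x" using nth_lt_tp[OF w(1)] by blast
  have w'A: "?w \<in> AV Q123 (Suc n)" by (rule AV_ins[OF wA sV])
  have V': "Vs Q123 ?w = {t. t \<le> Suc n \<and> pok (<) ?w t}" using V123[OF w'A] w by simp
  have V: "Vs Q123 w = {t. t \<le> n \<and> pok (<) w t}" using V123[OF wA] w by simp
  have sn: "s \<le> n" "pok (<) w s" using sV V by auto
  show ?thesis
  proof (cases "s = 0")
    case True
    have "Vs Q123 ?w = insert 0 (Suc ` Vs Q123 w)"
    proof (rule set_eqI)
      fix t
      show "t \<in> Vs Q123 ?w \<longleftrightarrow> t \<in> insert 0 (Suc ` Vs Q123 w)"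
      proof (cases t)
        case 0 then show ?thesis unfolding V' by simp
      next
        case (Suc t')
        have "t \<in> Vs Q123 ?w \<longleftrightarrow> t' \<le> n \<and> \<not> (\<exists>j<t'. ?x < w!j) \<and> pok (<) w t'"
        proof -
          have V'0: "Vs Q123 (?x # w) = {t. t \<le> Suc n \<and> pok (<) (?x # w) t}" using V' True ins0 by simp
          show ?thesis unfolding True ins0 V'0 Suc by (simp add: pok_Cons)
        qed
        also have "\<dots> \<longleftrightarrow> t' \<le> n \<and> pok (<) w t'"
        proof -
          have A: "\<not> (\<exists>j<t'. ?x < w!j)" if "t' \<le> n"
          proof
            assume "\<exists>j<t'. ?x < w!j"
            then obtain j where "j < t'" "?x < w!j" by blast
            moreover then have "w!j < ?x" using lt w(2) that by simp
            ultimately show False by simp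
          qed
          show ?thesis using A by blast
        qed
        also have "\<dots> \<longleftrightarrow> t \<in> insert 0 (Suc ` Vs Q123 w)" unfolding V Suc by auto
        finally show ?thesis .
      qed
    qed
    then have "act Q123 ?w = Suc (act Q123 w)" using card_ins0[OF finite_Vs[of Q123 w]] unfolding act_def by simp
    then show ?thesis using True by simp
  next
    case False
    have "Vs Q123 ?w = {..s}"
    proof (rule set_eqI)
      fix t
      show "t \<in> Vs Q123 ?w \<longleftrightarrow> t \<in> {..s}"
      proof (cases "t \<le> s")
        case True
        have "pok (<) ?w t" using pok_ins_le[of s w t "(<)" ?x] sn True w pok_mono[OF sn(2) True] by simp
        then show ?thesis unfolding V' using True sn by simp
      next
        case False
        have "?w ! 0 = w ! 0" using \<open>s \<noteq> 0\<close> sn w by (simp add: nth_ins)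
        moreover have "?w ! s = ?x" using sn w by (simp add: nth_ins)
        moreover have "w ! 0 < ?x" using lt \<open>s \<noteq> 0\<close> sn w by simp
        ultimately have "\<not> pok (<) ?w t" unfolding pok_def using False \<open>s \<noteq> 0\<close>
          by (metis not_le neq0_conv)
        then show ?thesis unfolding V' using False by simp
      qed
    qed
    then show ?thesis unfolding act_def using False by simp
  qed
qed

lemma H2_123:
  assumes wA: "w \<in> AV Q123 n"
  shows "inj_on (\<lambda>s. act Q123 (ins w s (tp w))) (Vs Q123 w)
         \<and> (\<lambda>s. act Q123 (ins w s (tp w))) ` Vs Q123 w \<subseteq> {2..act Q123 w + 1}"
proof -
  have w: "wfw w" "length w = n" using wA unfolding AV_def by auto
  have V: "Vs Q123 w = {t. t \<le> n \<and> pok (<) w t}" using V123[OF wA] w by simp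
  have sub: "{..s} \<subseteq> Vs Q123 w" if "s \<in> Vs Q123 w" for s
    using that pok_mono unfolding V by auto
  have le: "Suc s \<le> act Q123 w" if "s \<in> Vs Q123 w" for s
  proof -
    have "card {..s} \<le> card (Vs Q123 w)" by (rule card_mono[OF finite_Vs sub[OF that]])
    then show ?thesis unfolding act_def by simp
  qed
  have f: "act Q123 (ins w s (tp w)) = (if s = 0 then Suc (act Q123 w) else Suc s)" if "s \<in> Vs Q123 w" for s
    using act123[OF wA that] .
  show ?thesis
  proof
    show "inj_on (\<lambda>s. act Q123 (ins w s (tp w))) (Vs Q123 w)"
    proof (rule inj_onI)
      fix s1 s2 assume s1: "s1 \<in> Vs Q123 w" and s2: "s2 \<in> Vs Q123 w"
        and e: "act Q123 (ins w s1 (tp w)) = act Q123 (ins w s2 (tp w))"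
      show "s1 = s2" using e f[OF s1] f[OF s2] le[OF s1] le[OF s2] by (auto split: if_splits)
    qed
    show "(\<lambda>s. act Q123 (ins w s (tp w))) ` Vs Q123 w \<subseteq> {2..act Q123 w + 1}"
    proof
      fix y assume "y \<in> (\<lambda>s. act Q123 (ins w s (tp w))) ` Vs Q123 w"
      then obtain s where s: "s \<in> Vs Q123 w" and y: "y = act Q123 (ins w s (tp w))" by auto
      show "y \<in> {2..act Q123 w + 1}" using f[OF s] le[OF s] y by auto
    qed
  qed
qed

lemma NO_AV123: "u \<in> NO m \<Longrightarrow> u \<in> AV Q123 m"
  using NO_sub_AV[of Q123 m] Q123_d by blast

lemma H3_123: "card {u\<in>NO m. act Q123 u = k} = Gn m k"
proof (rule H3_from[where ea = "Cons (-1)" and eb = "Cons (-2)" and c = "-2"])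
  show "\<And>m P. card {v\<in>NO (Suc m). P v} = card {u\<in>NO m. P (-1 # u)} + card {u\<in>NO m. P (-2 # u)}"
    by (rule NO_Cons_dec)
  show "(-2::int) = -1 \<or> (-2::int) = -2" by simp
next
  fix m u assume u: "u \<in> NO m"
  have uA: "u \<in> AV Q123 m" using NO_AV123[OF u] .
  have lu: "length u = m" using u unfolding NO_def by simp
  have bu: "-1 # u \<in> NO (Suc m)" "-2 # u \<in> NO (Suc m)" using u unfolding NO_def by auto
  have V: "Vs Q123 u = {t. t \<le> m \<and> pok (<) u t}" using V123[OF uA] lu by simp
  have V1: "Vs Q123 (-1 # u) = {t. t \<le> Suc m \<and> pok (<) (-1 # u) t}" using V123[OF NO_AV123[OF bu(1)]] lu by simp
  have V2: "Vs Q123 (-2 # u) = {t. t \<le> Suc m \<and> pok (<) (-2 # u) t}" using V123[OF NO_AV123[OF bu(2)]] lu by simp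
  have "Vs Q123 (-1 # u) = insert 0 (Suc ` Vs Q123 u)"
  proof (rule set_eqI)
    fix t
    show "t \<in> Vs Q123 (-1 # u) \<longleftrightarrow> t \<in> insert 0 (Suc ` Vs Q123 u)"
    proof (cases t)
      case 0 then show ?thesis unfolding V1 by simp
    next
      case (Suc t')
      have "t \<in> Vs Q123 (-1 # u) \<longleftrightarrow> t' \<le> m \<and> \<not> (\<exists>j<t'. -1 < u!j) \<and> pok (<) u t'"
        unfolding V1 Suc by (simp add: pok_Cons)
      also have "\<dots> \<longleftrightarrow> t' \<le> m \<and> pok (<) u t'"
      proof -
        have A: "\<not> (\<exists>j<t'. -1 < u!j)" if "t' \<le> m"
        proof
          assume "\<exists>j<t'. -1 < u!j"
          then obtain j where j: "j < t'" "-1 < u!j" by blast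
          have "u!j = -1 \<or> u!j = -2" using NO_nth[OF u, of j] j(1) that by simp
          then show False using j(2) by auto
        qed
        show ?thesis using A by blast
      qed
      also have "\<dots> \<longleftrightarrow> t \<in> insert 0 (Suc ` Vs Q123 u)" unfolding V Suc by auto
      finally show ?thesis .
    qed
  qed
  then show "act Q123 (-1 # u) = Suc (act Q123 u)" using card_ins0[OF finite_Vs[of Q123 u]] unfolding act_def by simp
  have "Vs Q123 (-2 # u) = insert 0 (Suc ` {..lrun (-2) u})"
  proof (rule set_eqI)
    fix t
    show "t \<in> Vs Q123 (-2 # u) \<longleftrightarrow> t \<in> insert 0 (Suc ` {..lrun (-2) u})"
    proof (cases t)
      case 0 then show ?thesis unfolding V2 by simp
    next
      case (Suc t')
      have "t \<in> Vs Q123 (-2 # u) \<longleftrightarrow> t' \<le> m \<and> \<not> (\<exists>j<t'. -2 < u!j) \<and> pok (<) u t'"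
        unfolding V2 Suc by (simp add: pok_Cons)
      also have "\<dots> \<longleftrightarrow> t' \<le> m \<and> (\<forall>j<t'. u!j = -2)"
      proof
        assume a: "t' \<le> m \<and> \<not> (\<exists>j<t'. -2 < u!j) \<and> pok (<) u t'"
        show "t' \<le> m \<and> (\<forall>j<t'. u!j = -2)"
        proof (intro conjI allI impI)
          show "t' \<le> m" using a by simp
          fix j assume j: "j < t'"
          have "u!j = -1 \<or> u!j = -2" using NO_nth[OF u, of j] j a by simp
          moreover have "\<not> -2 < u!j" using a j by blast
          ultimately show "u!j = -2" by auto
        qed
      next
        assume a: "t' \<le> m \<and> (\<forall>j<t'. u!j = -2)"
        then have "pok (<) u t'" unfolding pok_def by auto
        then show "t' \<le> m \<and> \<not> (\<exists>j<t'. -2 < u!j) \<and> pok (<) u t'" using a by auto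
      qed
      also have "\<dots> \<longleftrightarrow> t' \<le> lrun (-2) u"
        using lrun_iff[of t' u "-2"] lrun_le[of "-2" u] lu by auto
      also have "\<dots> \<longleftrightarrow> t \<in> insert 0 (Suc ` {..lrun (-2) u})" unfolding Suc by auto
      finally show ?thesis .
    qed
  qed
  then show "act Q123 (-2 # u) = Suc (Suc (lrun (-2) u))" using card_ins0[of "{..lrun (-2) u}"] unfolding act_def by simp
qed

definition Q213 :: "int \<Rightarrow> int \<Rightarrow> int \<Rightarrow> bool" where
  "Q213 x y z \<longleftrightarrow> y < x \<and> x < z"

lemma Q213_d: "Q213 x y z \<Longrightarrow> x \<noteq> y \<and> y \<noteq> z \<and> x \<noteq> z"
  unfolding Q213_def by auto

lemma V213: "w \<in> AV Q213 n \<Longrightarrow> Vs Q213 w = {s. s \<le> length w \<and> pok (>) w s}"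
proof -
  assume wA: "w \<in> AV Q213 n"
  then have w: "wfw w" "avP Q213 w" unfolding AV_def by auto
  have lt: "\<And>i. i < length w \<Longrightarrow> w!i < tp w" using nth_lt_tp[OF w(1)] by blast
  show ?thesis
  proof (rule set_eqI)
    fix s
    show "s \<in> Vs Q213 w \<longleftrightarrow> s \<in> {s. s \<le> length w \<and> pok (>) w s}"
    proof
      assume "s \<in> Vs Q213 w"
      then show "s \<in> {s. s \<le> length w \<and> pok (>) w s}"
        unfolding Vs_char[OF w] pok_def Q213_def using lt by fastforce
    next
      assume a: "s \<in> {s. s \<le> length w \<and> pok (>) w s}"
      have "\<not> (\<exists>i j. i < s \<and> s \<le> j \<and> j < length w \<and> tp w < w!i \<and> w!i < w!j)" using lt a by fastforce
      moreover have "\<not> (\<exists>i j. s \<le> i \<and> i < j \<and> j < length w \<and> w!i < tp w \<and> tp w < w!j)" using lt by fastforce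
      ultimately show "s \<in> Vs Q213 w"
        unfolding Vs_char[OF w] Q213_def using a unfolding pok_def by auto
    qed
  qed
qed

lemma act213:
  assumes wA: "w \<in> AV Q213 n" and sV: "s \<in> Vs Q213 w"
  shows "act Q213 (ins w s (tp w)) = Suc (Suc s)"
proof -
  let ?x = "tp w"
  let ?w = "ins w s ?x"
  have w: "wfw w" "length w = n" using wA unfolding AV_def by auto
  have lt: "\<And>i. i < length w \<Longrightarrow> w!i < ?x" using nth_lt_tp[OF w(1)] by blast
  have w'A: "?w \<in> AV Q213 (Suc n)" by (rule AV_ins[OF wA sV])
  have V': "Vs Q213 ?w = {t. t \<le> Suc n \<and> pok (>) ?w t}" using V213[OF w'A] w by simp
  have V: "Vs Q213 w = {t. t \<le> n \<and> pok (>) w t}" using V213[OF wA] w by simp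
  have sn: "s \<le> n" "pok (>) w s" using sV V by auto
  have "Vs Q213 ?w = {..Suc s}"
  proof (rule set_eqI)
    fix t
    show "t \<in> Vs Q213 ?w \<longleftrightarrow> t \<in> {..Suc s}"
    proof (cases "t \<le> s")
      case True
      have "pok (>) ?w t" using pok_ins_le[of s w t "(>)" ?x] sn True w pok_mono[OF sn(2) True] by simp
      then show ?thesis unfolding V' using True sn by simp
    next
      case False
      show ?thesis
      proof (cases "t = Suc s")
        case True
        have "pok (>) ?w (Suc s)"
          unfolding pok_def
        proof
          assume "\<exists>i j. i < j \<and> j < Suc s \<and> ?w!i > ?w!j"
          then obtain i j where o: "i < j" "j < Suc s" "?w!i > ?w!j" by blast
          show False
          proof (cases "j < s")
            case True
            then have "w!i > w!j" using o sn w by (simp add: nth_ins)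
            then show False using sn(2) o True unfolding pok_def by blast
          next
            case False
            then have "j = s" using o by simp
            then have "?w!j = ?x" "?w!i = w!i" using o sn w by (simp_all add: nth_ins)
            moreover have "w!i < ?x" using lt o \<open>j = s\<close> sn w by simp
            ultimately show False using o by simp
          qed
        qed
        then show ?thesis unfolding V' using True sn by simp
      next
        case False
        show ?thesis
        proof (cases "t \<le> Suc n")
          case True
          have ss: "Suc s < t" "s < n" using False \<open>\<not> t \<le> s\<close> True by auto
          have "?w ! s = ?x" using sn w by (simp add: nth_ins)
          moreover have "?w ! Suc s = w ! s" using ss w by (simp add: nth_ins)
          moreover have "w ! s < ?x" using lt ss w by simp
          ultimately have "\<not> pok (>) ?w t" unfolding pok_def using ss by (metis lessI)
          then show ?thesis unfolding V' using False \<open>\<not> t \<le> s\<close> by simp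
        next
          case False
          then show ?thesis unfolding V' using sn by simp
        qed
      qed
    qed
  qed
  then show ?thesis unfolding act_def by simp
qed

lemma H2_213:
  assumes wA: "w \<in> AV Q213 n"
  shows "inj_on (\<lambda>s. act Q213 (ins w s (tp w))) (Vs Q213 w)
         \<and> (\<lambda>s. act Q213 (ins w s (tp w))) ` Vs Q213 w \<subseteq> {2..act Q213 w + 1}"
proof -
  have w: "wfw w" "length w = n" using wA unfolding AV_def by auto
  have V: "Vs Q213 w = {t. t \<le> n \<and> pok (>) w t}" using V213[OF wA] w by simp
  have sub: "{..s} \<subseteq> Vs Q213 w" if "s \<in> Vs Q213 w" for s
    using that pok_mono unfolding V by auto
  have le: "Suc s \<le> act Q213 w" if "s \<in> Vs Q213 w" for s
  proof -
    have "card {..s} \<le> card (Vs Q213 w)" by (rule card_mono[OF finite_Vs sub[OF that]])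
    then show ?thesis unfolding act_def by simp
  qed
  have f: "act Q213 (ins w s (tp w)) = Suc (Suc s)" if "s \<in> Vs Q213 w" for s
    using act213[OF wA that] .
  show ?thesis
  proof
    show "inj_on (\<lambda>s. act Q213 (ins w s (tp w))) (Vs Q213 w)"
      using f by (auto intro: inj_onI)
    show "(\<lambda>s. act Q213 (ins w s (tp w))) ` Vs Q213 w \<subseteq> {2..act Q213 w + 1}"
    proof
      fix y assume "y \<in> (\<lambda>s. act Q213 (ins w s (tp w))) ` Vs Q213 w"
      then obtain s where s: "s \<in> Vs Q213 w" and y: "y = act Q213 (ins w s (tp w))" by auto
      show "y \<in> {2..act Q213 w + 1}" using f[OF s] le[OF s] y by auto
    qed
  qed
qed

lemma NO_AV213: "u \<in> NO m \<Longrightarrow> u \<in> AV Q213 m"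
  using NO_sub_AV[of Q213 m] Q213_d by blast

lemma H3_213: "card {u\<in>NO m. act Q213 u = k} = Gn m k"
proof (rule H3_from[where ea = "Cons (-2)" and eb = "Cons (-1)" and c = "-1"])
  show "\<And>m P. card {v\<in>NO (Suc m). P v} = card {u\<in>NO m. P (-2 # u)} + card {u\<in>NO m. P (-1 # u)}"
    using NO_Cons_dec by (simp add: add.commute)
  show "(-1::int) = -1 \<or> (-1::int) = -2" by simp
next
  fix m u assume u: "u \<in> NO m"
  have uA: "u \<in> AV Q213 m" using NO_AV213[OF u] .
  have lu: "length u = m" using u unfolding NO_def by simp
  have bu: "-2 # u \<in> NO (Suc m)" "-1 # u \<in> NO (Suc m)" using u unfolding NO_def by auto
  have V: "Vs Q213 u = {t. t \<le> m \<and> pok (>) u t}" using V213[OF uA] lu by simp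
  have V1: "Vs Q213 (-2 # u) = {t. t \<le> Suc m \<and> pok (>) (-2 # u) t}" using V213[OF NO_AV213[OF bu(1)]] lu by simp
  have V2: "Vs Q213 (-1 # u) = {t. t \<le> Suc m \<and> pok (>) (-1 # u) t}" using V213[OF NO_AV213[OF bu(2)]] lu by simp
  have "Vs Q213 (-2 # u) = insert 0 (Suc ` Vs Q213 u)"
  proof (rule set_eqI)
    fix t
    show "t \<in> Vs Q213 (-2 # u) \<longleftrightarrow> t \<in> insert 0 (Suc ` Vs Q213 u)"
    proof (cases t)
      case 0 then show ?thesis unfolding V1 by simp
    next
      case (Suc t')
      have "t \<in> Vs Q213 (-2 # u) \<longleftrightarrow> t' \<le> m \<and> \<not> (\<exists>j<t'. -2 > u!j) \<and> pok (>) u t'"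
        unfolding V1 Suc by (simp add: pok_Cons)
      also have "\<dots> \<longleftrightarrow> t' \<le> m \<and> pok (>) u t'"
      proof -
        have A: "\<not> (\<exists>j<t'. -2 > u!j)" if "t' \<le> m"
        proof
          assume "\<exists>j<t'. -2 > u!j"
          then obtain j where j: "j < t'" "-2 > u!j" by blast
          have "u!j = -1 \<or> u!j = -2" using NO_nth[OF u, of j] j(1) that by simp
          then show False using j(2) by auto
        qed
        show ?thesis using A by blast
      qed
      also have "\<dots> \<longleftrightarrow> t \<in> insert 0 (Suc ` Vs Q213 u)" unfolding V Suc by auto
      finally show ?thesis .
    qed
  qed
  then show "act Q213 (-2 # u) = Suc (act Q213 u)" using card_ins0[OF finite_Vs[of Q213 u]] unfolding act_def by simp
  have "Vs Q213 (-1 # u) = insert 0 (Suc ` {..lrun (-1) u})"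
  proof (rule set_eqI)
    fix t
    show "t \<in> Vs Q213 (-1 # u) \<longleftrightarrow> t \<in> insert 0 (Suc ` {..lrun (-1) u})"
    proof (cases t)
      case 0 then show ?thesis unfolding V2 by simp
    next
      case (Suc t')
      have "t \<in> Vs Q213 (-1 # u) \<longleftrightarrow> t' \<le> m \<and> \<not> (\<exists>j<t'. -1 > u!j) \<and> pok (>) u t'"
        unfolding V2 Suc by (simp add: pok_Cons)
      also have "\<dots> \<longleftrightarrow> t' \<le> m \<and> (\<forall>j<t'. u!j = -1)"
      proof
        assume a: "t' \<le> m \<and> \<not> (\<exists>j<t'. -1 > u!j) \<and> pok (>) u t'"
        show "t' \<le> m \<and> (\<forall>j<t'. u!j = -1)"
        proof (intro conjI allI impI)
          show "t' \<le> m" using a by simp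
          fix j assume j: "j < t'"
          have "u!j = -1 \<or> u!j = -2" using NO_nth[OF u, of j] j a by simp
          moreover have "\<not> -1 > u!j" using a j by blast
          ultimately show "u!j = -1" by auto
        qed
      next
        assume a: "t' \<le> m \<and> (\<forall>j<t'. u!j = -1)"
        then have "pok (>) u t'" unfolding pok_def by auto
        then show "t' \<le> m \<and> \<not> (\<exists>j<t'. -1 > u!j) \<and> pok (>) u t'" using a by auto
      qed
      also have "\<dots> \<longleftrightarrow> t' \<le> lrun (-1) u"
        using lrun_iff[of t' u "-1"] lrun_le[of "-1" u] lu by auto
      also have "\<dots> \<longleftrightarrow> t \<in> insert 0 (Suc ` {..lrun (-1) u})" unfolding Suc by auto
      finally show ?thesis .
    qed
  qed
  then show "act Q213 (-1 # u) = Suc (Suc (lrun (-1) u))" using card_ins0[of "{..lrun (-1) u}"] unfolding act_def by simp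
qed

definition Q132 :: "int \<Rightarrow> int \<Rightarrow> int \<Rightarrow> bool" where
  "Q132 x y z \<longleftrightarrow> x < z \<and> z < y"

lemma Q132_d: "Q132 x y z \<Longrightarrow> x \<noteq> y \<and> y \<noteq> z \<and> x \<noteq> z"
  unfolding Q132_def by auto

definition cok :: "int list \<Rightarrow> nat \<Rightarrow> bool" where
  "cok w s \<longleftrightarrow> \<not> (\<exists>i j. i < s \<and> s \<le> j \<and> j < length w \<and> w!i < w!j)"

lemma V132: "w \<in> AV Q132 n \<Longrightarrow> Vs Q132 w = {s. s \<le> length w \<and> cok w s}"
proof -
  assume wA: "w \<in> AV Q132 n"
  then have w: "wfw w" "avP Q132 w" unfolding AV_def by auto
  have lt: "\<And>i. i < length w \<Longrightarrow> w!i < tp w" using nth_lt_tp[OF w(1)] by blast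
  show ?thesis
  proof (rule set_eqI)
    fix s
    show "s \<in> Vs Q132 w \<longleftrightarrow> s \<in> {s. s \<le> length w \<and> cok w s}"
    proof
      assume "s \<in> Vs Q132 w"
      then show "s \<in> {s. s \<le> length w \<and> cok w s}"
        unfolding Vs_char[OF w] cok_def Q132_def using lt by fastforce
    next
      assume a: "s \<in> {s. s \<le> length w \<and> cok w s}"
      have "\<not> (\<exists>i j. i < j \<and> j < s \<and> w!i < tp w \<and> tp w < w!j)"
      proof
        assume "\<exists>i j. i < j \<and> j < s \<and> w!i < tp w \<and> tp w < w!j"
        then obtain i j where o: "j < s" "tp w < w!j" by blast
        then have "w!j < tp w" using lt a by simp
        then show False using o by simp
      qed
      moreover have "\<not> (\<exists>i j. s \<le> i \<and> i < j \<and> j < length w \<and> tp w < w!j \<and> w!j < w!i)" using lt by fastforce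
      ultimately show "s \<in> Vs Q132 w"
        unfolding Vs_char[OF w] Q132_def using a unfolding cok_def by auto
    qed
  qed
qed

lemma act132:
  assumes wA: "w \<in> AV Q132 n" and sV: "s \<in> Vs Q132 w"
  shows "act Q132 (ins w s (tp w)) = Suc (card {v\<in>Vs Q132 w. s \<le> v})"
proof -
  let ?x = "tp w"
  let ?w = "ins w s ?x"
  have w: "wfw w" "length w = n" using wA unfolding AV_def by auto
  have lt: "\<And>i. i < length w \<Longrightarrow> w!i < ?x" using nth_lt_tp[OF w(1)] by blast
  have w'A: "?w \<in> AV Q132 (Suc n)" by (rule AV_ins[OF wA sV])
  have V': "Vs Q132 ?w = {t. t \<le> Suc n \<and> cok ?w t}" using V132[OF w'A] w by simp
  have V: "Vs Q132 w = {t. t \<le> n \<and> cok w t}" using V132[OF wA] w by simp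
  have sn: "s \<le> n" "cok w s" using sV V by auto
  have "Vs Q132 ?w = insert 0 (Suc ` {v\<in>Vs Q132 w. s \<le> v})"
  proof (rule set_eqI)
    fix t
    show "t \<in> Vs Q132 ?w \<longleftrightarrow> t \<in> insert 0 (Suc ` {v\<in>Vs Q132 w. s \<le> v})"
    proof (cases t)
      case 0 then show ?thesis unfolding V' cok_def by simp
    next
      case (Suc t')
      show ?thesis
      proof (cases "t' < s")
        case True
        have "?w ! 0 = w ! 0" using True sn w by (simp add: nth_ins)
        moreover have "?w ! s = ?x" using sn w by (simp add: nth_ins)
        moreover have "w ! 0 < ?x" using lt True sn w by simp
        ultimately have "\<not> cok ?w t" unfolding cok_def using True sn w Suc
          by (metis Suc_le_eq le_imp_less_Suc length_ins zero_less_Suc)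
        then show ?thesis unfolding V' using True Suc by auto
      next
        case False
        then have st: "s \<le> t'" by simp
        have "cok ?w (Suc t') \<longleftrightarrow> cok w t'" if tn: "t' \<le> n"
        proof
          assume c: "cok ?w (Suc t')"
          show "cok w t'"
            unfolding cok_def
          proof
            assume "\<exists>i j. i < t' \<and> t' \<le> j \<and> j < length w \<and> w!i < w!j"
            then obtain i j where o: "i < t'" "t' \<le> j" "j < length w" "w!i < w!j" by blast
            define i' where "i' = (if i < s then i else Suc i)"
            have "?w ! i' = w ! i" unfolding i'_def using o sn w by (auto simp: nth_ins)
            moreover have "?w ! Suc j = w ! j" using o st sn w by (simp add: nth_ins)
            moreover have "i' < Suc t'" "Suc t' \<le> Suc j" "Suc j < length ?w" unfolding i'_def using o by auto
            ultimately show False using c o unfolding cok_def by metis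
          qed
        next
          assume c: "cok w t'"
          show "cok ?w (Suc t')"
            unfolding cok_def
          proof
            assume "\<exists>i j. i < Suc t' \<and> Suc t' \<le> j \<and> j < length ?w \<and> ?w!i < ?w!j"
            then obtain i j where o: "i < Suc t'" "Suc t' \<le> j" "j < length ?w" "?w!i < ?w!j" by blast
            have j1: "?w ! j = w ! (j - 1)" "j - 1 < length w" "t' \<le> j - 1" using o st sn w by (auto simp: nth_ins)
            show False
            proof (cases "i = s")
              case True
              then have "?w ! i = ?x" using sn w by (simp add: nth_ins)
              then show False using o j1 lt by fastforce
            next
              case False
              define i' where "i' = (if i < s then i else i - 1)"
              have "?w ! i = w ! i'" unfolding i'_def using False o sn w by (auto simp: nth_ins)
              moreover have "i' < t'" unfolding i'_def using False o st by auto
              ultimately show False using c o j1 unfolding cok_def by metis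
            qed
          qed
        qed
        then show ?thesis unfolding V' V Suc using st by auto
      qed
    qed
  qed
  moreover have "finite {v\<in>Vs Q132 w. s \<le> v}" by simp
  ultimately show ?thesis unfolding act_def using card_ins0 by simp
qed

lemma H2_132:
  assumes wA: "w \<in> AV Q132 n"
  shows "inj_on (\<lambda>s. act Q132 (ins w s (tp w))) (Vs Q132 w)
         \<and> (\<lambda>s. act Q132 (ins w s (tp w))) ` Vs Q132 w \<subseteq> {2..act Q132 w + 1}"
proof -
  let ?V = "Vs Q132 w"
  have f: "act Q132 (ins w s (tp w)) = Suc (card {v\<in>?V. s \<le> v})" if "s \<in> ?V" for s
    using act132[OF wA that] .
  have ge: "1 \<le> card {v\<in>?V. s \<le> v}" if "s \<in> ?V" for s
  proof -
    have "{v\<in>?V. s \<le> v} \<noteq> {}" using that by auto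
    then show ?thesis by (simp add: Suc_le_eq card_gt_0_iff)
  qed
  have le: "card {v\<in>?V. s \<le> v} \<le> card ?V" for s by (rule card_mono) auto
  show ?thesis
  proof
    show "inj_on (\<lambda>s. act Q132 (ins w s (tp w))) ?V"
    proof (rule inj_onI)
      fix s1 s2 assume s1: "s1 \<in> ?V" and s2: "s2 \<in> ?V"
        and e: "act Q132 (ins w s1 (tp w)) = act Q132 (ins w s2 (tp w))"
      have ce: "card {v\<in>?V. s1 \<le> v} = card {v\<in>?V. s2 \<le> v}" using e f[OF s1] f[OF s2] by simp
      show "s1 = s2"
      proof (rule ccontr)
        assume "s1 \<noteq> s2"
        then consider "s1 < s2" | "s2 < s1" by linarith
        then show False
        proof cases
          case 1
          have "s1 \<in> {v\<in>?V. s1 \<le> v}" "s1 \<notin> {v\<in>?V. s2 \<le> v}" using 1 s1 by auto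
          then have "{v\<in>?V. s2 \<le> v} \<subset> {v\<in>?V. s1 \<le> v}" using 1 by fastforce
          then have "card {v\<in>?V. s2 \<le> v} < card {v\<in>?V. s1 \<le> v}" by (intro psubset_card_mono) auto
          then show False using ce by simp
        next
          case 2
          have "s2 \<in> {v\<in>?V. s2 \<le> v}" "s2 \<notin> {v\<in>?V. s1 \<le> v}" using 2 s2 by auto
          then have "{v\<in>?V. s1 \<le> v} \<subset> {v\<in>?V. s2 \<le> v}" using 2 by fastforce
          then have "card {v\<in>?V. s1 \<le> v} < card {v\<in>?V. s2 \<le> v}" by (intro psubset_card_mono) auto
          then show False using ce by simp
        qed
      qed
    qed
    show "(\<lambda>s. act Q132 (ins w s (tp w))) ` ?V \<subseteq> {2..act Q132 w + 1}"
    proof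
      fix y assume "y \<in> (\<lambda>s. act Q132 (ins w s (tp w))) ` ?V"
      then obtain s where s: "s \<in> ?V" and y: "y = act Q132 (ins w s (tp w))" by auto
      show "y \<in> {2..act Q132 w + 1}" using f[OF s] ge[OF s] le[of s] y unfolding act_def by auto
    qed
  qed
qed

lemma NO_AV132: "u \<in> NO m \<Longrightarrow> u \<in> AV Q132 m"
  using NO_sub_AV[of Q132 m] Q132_d by blast

lemma cok_snoc: "t \<le> length u \<Longrightarrow> cok (u @ [x]) t \<longleftrightarrow> \<not> (\<exists>i<t. u!i < x) \<and> cok u t"
proof
  assume t: "t \<le> length u" and c: "cok (u @ [x]) t"
  have "\<not> (\<exists>i<t. u!i < x)"
  proof
    assume "\<exists>i<t. u!i < x"
    then obtain i where "i < t" "u!i < x" by blast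
    then have "i < t" "t \<le> length u" "length u < length (u @ [x])" "(u @ [x])!i < (u @ [x]) ! length u"
      using t by (auto simp: nth_append)
    then show False using c unfolding cok_def by blast
  qed
  moreover have "cok u t"
    unfolding cok_def
  proof
    assume "\<exists>i j. i < t \<and> t \<le> j \<and> j < length u \<and> u!i < u!j"
    then obtain i j where o: "i < t" "t \<le> j" "j < length u" "u!i < u!j" by blast
    then have "(u @ [x])!i < (u @ [x])!j" "j < length (u @ [x])" by (auto simp: nth_append)
    then show False using c o unfolding cok_def by blast
  qed
  ultimately show "\<not> (\<exists>i<t. u!i < x) \<and> cok u t" by blast
next
  assume t: "t \<le> length u" and c: "\<not> (\<exists>i<t. u!i < x) \<and> cok u t"
  show "cok (u @ [x]) t"
    unfolding cok_def
  proof
    assume "\<exists>i j. i < t \<and> t \<le> j \<and> j < length (u @ [x]) \<and> (u @ [x])!i < (u @ [x])!j"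
    then obtain i j where o: "i < t" "t \<le> j" "j < length (u @ [x])" "(u @ [x])!i < (u @ [x])!j" by blast
    have ui: "(u @ [x])!i = u!i" using o t by (simp add: nth_append)
    show False
    proof (cases "j < length u")
      case True
      then have "u!i < u!j" using o ui by (simp add: nth_append)
      then show False using c o True unfolding cok_def by blast
    next
      case False
      then have "j = length u" using o by simp
      then have "u!i < x" using o ui by simp
      then show False using c o by blast
    qed
  qed
qed

lemma cok_end: "cok w (length w)"
  unfolding cok_def by auto

lemma H3_132: "card {u\<in>NO m. act Q132 u = k} = Gn m k"
proof (rule H3_from[where ea = "\<lambda>u. u @ [-2]" and eb = "\<lambda>u. u @ [-1]" and c = "-1"])
  show "\<And>m P. card {v\<in>NO (Suc m). P v} = card {u\<in>NO m. P (u @ [-2])} + card {u\<in>NO m. P (u @ [-1])}"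
    by (rule NO_snoc_dec)
  show "(-1::int) = -1 \<or> (-1::int) = -2" by simp
next
  fix m u assume u: "u \<in> NO m"
  have uA: "u \<in> AV Q132 m" using NO_AV132[OF u] .
  have lu: "length u = m" using u unfolding NO_def by simp
  have bu: "u @ [-2] \<in> NO (Suc m)" "u @ [-1] \<in> NO (Suc m)" using u unfolding NO_def by auto
  have V: "Vs Q132 u = {t. t \<le> m \<and> cok u t}" using V132[OF uA] lu by simp
  have V1: "Vs Q132 (u @ [-2]) = {t. t \<le> Suc m \<and> cok (u @ [-2]) t}" using V132[OF NO_AV132[OF bu(1)]] lu by simp
  have V2: "Vs Q132 (u @ [-1]) = {t. t \<le> Suc m \<and> cok (u @ [-1]) t}" using V132[OF NO_AV132[OF bu(2)]] lu by simp
  have notin: "Suc m \<notin> Vs Q132 u" unfolding V by simp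
  have "Vs Q132 (u @ [-2]) = insert (Suc m) (Vs Q132 u)"
  proof (rule set_eqI)
    fix t
    show "t \<in> Vs Q132 (u @ [-2]) \<longleftrightarrow> t \<in> insert (Suc m) (Vs Q132 u)"
    proof (cases "t = Suc m")
      case True
      then show ?thesis unfolding V1 using cok_end[of "u @ [-2]"] lu by simp
    next
      case False
      show ?thesis
      proof (cases "t \<le> m")
        case True
        have "\<not> (\<exists>i<t. u!i < -2)"
        proof
          assume "\<exists>i<t. u!i < -2"
          then obtain i where i: "i < t" "u!i < -2" by blast
          have "u!i = -1 \<or> u!i = -2" using NO_nth[OF u, of i] i True by simp
          then show False using i by auto
        qed
        then show ?thesis unfolding V1 V using cok_snoc[of t u "-2"] True lu False by auto
      next
        case f2: False
        then show ?thesis unfolding V1 V using False by auto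
      qed
    qed
  qed
  then show "act Q132 (u @ [-2]) = Suc (act Q132 u)" unfolding act_def using notin by simp
  have "Vs Q132 (u @ [-1]) = insert (Suc m) {..lrun (-1) u}"
  proof (rule set_eqI)
    fix t
    show "t \<in> Vs Q132 (u @ [-1]) \<longleftrightarrow> t \<in> insert (Suc m) {..lrun (-1) u}"
    proof (cases "t = Suc m")
      case True
      then show ?thesis unfolding V1 using cok_end[of "u @ [-1]"] lu V2 by simp
    next
      case False
      show ?thesis
      proof (cases "t \<le> m")
        case True
        have "cok (u @ [-1]) t \<longleftrightarrow> (\<forall>j<t. u!j = -1)"
        proof
          assume a: "cok (u @ [-1]) t"
          then have a': "\<not> (\<exists>i<t. u!i < -1)" using cok_snoc[of t u "-1"] True lu by simp
          show "\<forall>j<t. u!j = -1"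
          proof (intro allI impI)
            fix j assume j: "j < t"
            have "u!j = -1 \<or> u!j = -2" using NO_nth[OF u, of j] j True by simp
            then show "u!j = -1" using a' j by auto
          qed
        next
          assume a: "\<forall>j<t. u!j = -1"
          have "cok u t"
            unfolding cok_def
          proof
            assume "\<exists>i j. i < t \<and> t \<le> j \<and> j < length u \<and> u!i < u!j"
            then obtain i j where o: "i < t" "t \<le> j" "j < length u" "u!i < u!j" by blast
            have "u!j = -1 \<or> u!j = -2" using NO_nth[OF u, of j] o lu by simp
            then show False using a o by auto
          qed
          then show "cok (u @ [-1]) t" using cok_snoc[of t u "-1"] True lu a by simp
        qed
        also have "\<dots> \<longleftrightarrow> t \<le> lrun (-1) u" using lrun_iff[of t u "-1"] True lu by simp
        finally show ?thesis unfolding V2 using True False by auto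
      next
        case f2: False
        have "lrun (-1) u \<le> m" using lrun_le[of "-1" u] lu by simp
        then show ?thesis unfolding V2 using False f2 by auto
      qed
    qed
  qed
  moreover have "Suc m \<notin> {..lrun (-1) u}" using lrun_le[of "-1" u] lu by simp
  ultimately show "act Q132 (u @ [-1]) = Suc (Suc (lrun (-1) u))" unfolding act_def by simp
qed

definition Sa :: "nat \<Rightarrow> (nat \<Rightarrow> nat) \<Rightarrow> (nat \<Rightarrow> int) \<Rightarrow> nat set" where
  "Sa n \<pi> \<phi> = {i\<in>{1..n}. \<pi> i = i \<and> \<phi> i \<noteq> -3}"

definition rk :: "nat set \<Rightarrow> nat \<Rightarrow> nat" where
  "rk T v = card {t\<in>T. t \<le> v}"

lemma rk_less: "finite T \<Longrightarrow> t1 \<in> T \<Longrightarrow> t2 \<in> T \<Longrightarrow> t1 < t2 \<Longrightarrow> rk T t1 < rk T t2"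
proof -
  assume T: "finite T" and t: "t1 \<in> T" "t2 \<in> T" "t1 < t2"
  have "{t\<in>T. t \<le> t1} \<subset> {t\<in>T. t \<le> t2}"
  proof
    show "{t\<in>T. t \<le> t1} \<subseteq> {t\<in>T. t \<le> t2}" using t by auto
    have "t2 \<in> {t\<in>T. t \<le> t2}" "t2 \<notin> {t\<in>T. t \<le> t1}" using t by auto
    then show "{t\<in>T. t \<le> t1} \<noteq> {t\<in>T. t \<le> t2}" by blast
  qed
  then show ?thesis unfolding rk_def using T by (intro psubset_card_mono) auto
qed

lemma rk_inj: "finite T \<Longrightarrow> inj_on (rk T) T"
proof (rule inj_onI)
  fix x y assume T: "finite T" and xy: "x \<in> T" "y \<in> T" "rk T x = rk T y"
  show "x = y"
  proof (rule ccontr)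
    assume "x \<noteq> y"
    then consider "x < y" | "y < x" by linarith
    then show False using rk_less[OF T] xy by cases force+
  qed
qed

lemma rk_bij: "finite T \<Longrightarrow> bij_betw (rk T) T {1..card T}"
proof -
  assume T: "finite T"
  have sub: "rk T ` T \<subseteq> {1..card T}"
  proof
    fix y assume "y \<in> rk T ` T"
    then obtain t where t: "t \<in> T" "y = rk T t" by auto
    have "t \<in> {t'\<in>T. t' \<le> t}" using t by simp
    then have "1 \<le> rk T t" unfolding rk_def using T by (metis (no_types, lifting) One_nat_def Suc_leI card_gt_0_iff empty_iff finite_subset mem_Collect_eq subsetI)
    moreover have "rk T t \<le> card T" unfolding rk_def using T by (intro card_mono) auto
    ultimately show "y \<in> {1..card T}" using t by simp
  qed
  have "card (rk T ` T) = card {1..card T}" using card_image[OF rk_inj[OF T]] by simp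
  then have "rk T ` T = {1..card T}" using sub by (intro card_subset_eq) auto
  then show ?thesis using rk_inj[OF T] unfolding bij_betw_def by simp
qed

lemma arr_basic:
  assumes a: "(\<pi>, \<phi>) \<in> arrangements3 n"
  shows "\<pi> permutes {1..n}"
    and "\<And>i. i \<in> Sa n \<pi> \<phi> \<Longrightarrow> \<pi> i = i \<and> (\<phi> i = -1 \<or> \<phi> i = -2) \<and> pf3_raw \<pi> \<phi> i = \<phi> i"
    and "\<And>i. i \<in> {1..n} - Sa n \<pi> \<phi> \<Longrightarrow> pf3_raw \<pi> \<phi> i = int (\<pi> i) \<and> \<pi> i \<in> {1..n} - Sa n \<pi> \<phi>"
    and "\<And>i. i \<notin> {1..n} \<Longrightarrow> \<phi> i = 0"
proof -
  have p: "\<pi> permutes {1..n}" and ph: "\<And>i. \<phi> i \<in> (if i \<in> {1..n} \<and> \<pi> i = i then {-1,-2,-3} else {0})"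
    using a unfolding arrangements3_def by auto
  show "\<pi> permutes {1..n}" by (rule p)
  show "\<pi> i = i \<and> (\<phi> i = -1 \<or> \<phi> i = -2) \<and> pf3_raw \<pi> \<phi> i = \<phi> i" if "i \<in> Sa n \<pi> \<phi>" for i
    using that ph[of i] unfolding Sa_def pf3_raw_def by auto
  show "\<phi> i = 0" if "i \<notin> {1..n}" for i using ph[of i] that by auto
  show "pf3_raw \<pi> \<phi> i = int (\<pi> i) \<and> \<pi> i \<in> {1..n} - Sa n \<pi> \<phi>" if i: "i \<in> {1..n} - Sa n \<pi> \<phi>" for i
  proof
    show "pf3_raw \<pi> \<phi> i = int (\<pi> i)" using i unfolding Sa_def pf3_raw_def by auto
    have "\<pi> i \<in> {1..n}" using permutes_in_image[OF p] i by simp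
    moreover have "\<pi> i \<notin> Sa n \<pi> \<phi>"
    proof
      assume "\<pi> i \<in> Sa n \<pi> \<phi>"
      then have e: "\<pi> (\<pi> i) = \<pi> i" "\<phi> (\<pi> i) \<noteq> -3" unfolding Sa_def by auto
      then have "\<pi> i = i" using permutes_inj[OF p] by (meson injD)
      then show False using e i unfolding Sa_def by auto
    qed
    ultimately show "\<pi> i \<in> {1..n} - Sa n \<pi> \<phi>" by simp
  qed
qed

lemma arr_imgT:
  assumes a: "(\<pi>, \<phi>) \<in> arrangements3 n"
  shows "\<pi> ` ({1..n} - Sa n \<pi> \<phi>) = {1..n} - Sa n \<pi> \<phi>"
proof
  show "\<pi> ` ({1..n} - Sa n \<pi> \<phi>) \<subseteq> {1..n} - Sa n \<pi> \<phi>" using arr_basic(3)[OF a] by auto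
  show "{1..n} - Sa n \<pi> \<phi> \<subseteq> \<pi> ` ({1..n} - Sa n \<pi> \<phi>)"
  proof
    fix t assume t: "t \<in> {1..n} - Sa n \<pi> \<phi>"
    then obtain j where j: "j \<in> {1..n}" "\<pi> j = t" using permutes_image[OF arr_basic(1)[OF a]] by (metis DiffD1 imageE)
    have "j \<notin> Sa n \<pi> \<phi>"
    proof
      assume "j \<in> Sa n \<pi> \<phi>"
      then have "\<pi> j = j" using arr_basic(2)[OF a] by blast
      then show False using j t \<open>j \<in> Sa n \<pi> \<phi>\<close> by simp
    qed
    then show "t \<in> \<pi> ` ({1..n} - Sa n \<pi> \<phi>)" using j by blast
  qed
qed

lemma pf3_nth:
  assumes a: "(\<pi>, \<phi>) \<in> arrangements3 n" and i: "i \<in> {1..n}"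
  shows "pf3 n \<pi> \<phi> ! (i - 1) = (if i \<in> Sa n \<pi> \<phi> then \<phi> i else int (rk ({1..n} - Sa n \<pi> \<phi>) (\<pi> i)))"
proof -
  let ?S = "Sa n \<pi> \<phi>" and ?T = "{1..n} - Sa n \<pi> \<phi>" and ?r = "pf3_raw \<pi> \<phi>"
  have nth: "pf3 n \<pi> \<phi> ! (i - 1) = (let v = ?r i in if v > 0 then int (card {u \<in> ?r ` {1..n}. 0 < u \<and> u \<le> v}) else v)"
  proof -
    have l: "i - 1 < length [1..<n+1]" using i by auto
    have e: "[1..<n+1] ! (i - 1) = i" using i by (subst nth_upt) auto
    show ?thesis unfolding pf3_def nth_map[OF l] e by simp
  qed
  have pos: "{u \<in> ?r ` {1..n}. 0 < u} = int ` ?T"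
  proof
    show "{u \<in> ?r ` {1..n}. 0 < u} \<subseteq> int ` ?T"
    proof
      fix u assume u: "u \<in> {u \<in> ?r ` {1..n}. 0 < u}"
      then obtain j where j: "j \<in> {1..n}" "u = ?r j" "0 < u" by auto
      show "u \<in> int ` ?T"
      proof (cases "j \<in> ?S")
        case True
        then show ?thesis using arr_basic(2)[OF a True] j by auto
      next
        case False
        then have "j \<in> ?T" using j by simp
        then show ?thesis using arr_basic(3)[OF a, of j] j by auto
      qed
    qed
    show "int ` ?T \<subseteq> {u \<in> ?r ` {1..n}. 0 < u}"
    proof
      fix u assume "u \<in> int ` ?T"
      then obtain t where t: "t \<in> ?T" "u = int t" by auto
      then obtain j where j: "j \<in> ?T" "\<pi> j = t" using arr_imgT[OF a] by (metis imageE)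
      have "?r j = u" using arr_basic(3)[OF a j(1)] j t by simp
      moreover have "0 < u" using t by simp
      ultimately show "u \<in> {u \<in> ?r ` {1..n}. 0 < u}" using j by auto
    qed
  qed
  show ?thesis
  proof (cases "i \<in> ?S")
    case True
    then show ?thesis using nth arr_basic(2)[OF a True] by auto
  next
    case False
    then have iT: "i \<in> ?T" using i by simp
    have ri: "?r i = int (\<pi> i)" "\<pi> i \<in> ?T" using arr_basic(3)[OF a iT] by auto
    have "{u \<in> ?r ` {1..n}. 0 < u \<and> u \<le> int (\<pi> i)} = {u \<in> {u \<in> ?r ` {1..n}. 0 < u}. u \<le> int (\<pi> i)}"
      by blast
    also have "\<dots> = {u \<in> int ` ?T. u \<le> int (\<pi> i)}" unfolding pos ..
    also have "\<dots> = int ` {t\<in>?T. t \<le> \<pi> i}" by auto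
    finally have "{u \<in> ?r ` {1..n}. 0 < u \<and> u \<le> int (\<pi> i)} = int ` {t\<in>?T. t \<le> \<pi> i}" .
    then have "card {u \<in> ?r ` {1..n}. 0 < u \<and> u \<le> int (\<pi> i)} = rk ?T (\<pi> i)"
      unfolding rk_def by (simp add: card_image)
    moreover have "0 < ?r i" using ri by simp
    ultimately show ?thesis using nth ri False by simp
  qed
qed


lemma pf3_len[simp]: "length (pf3 n \<pi> \<phi>) = n"
  unfolding pf3_def by simp

lemma pf3_nth':
  assumes a: "(\<pi>, \<phi>) \<in> arrangements3 n" and p: "p < n"
  shows "pf3 n \<pi> \<phi> ! p = (if Suc p \<in> Sa n \<pi> \<phi> then \<phi> (Suc p) else int (rk ({1..n} - Sa n \<pi> \<phi>) (\<pi> (Suc p))))"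
  using pf3_nth[OF a, of "Suc p"] p by simp

lemma rk_pos: "finite T \<Longrightarrow> t \<in> T \<Longrightarrow> 1 \<le> rk T t \<and> rk T t \<le> card T"
  using rk_bij[of T] unfolding bij_betw_def by auto

lemma pf3_wf:
  assumes a: "(\<pi>, \<phi>) \<in> arrangements3 n"
  shows "wfw (pf3 n \<pi> \<phi>)"
proof -
  let ?w = "pf3 n \<pi> \<phi>" and ?S = "Sa n \<pi> \<phi>" and ?T = "{1..n} - Sa n \<pi> \<phi>"
  have fT: "finite ?T" by simp
  have val: "?w ! p = (if Suc p \<in> ?S then \<phi> (Suc p) else int (rk ?T (\<pi> (Suc p))))" if "p < n" for p
    using pf3_nth'[OF a that] .
  have neg: "\<phi> (Suc p) = -1 \<or> \<phi> (Suc p) = -2" if "Suc p \<in> ?S" for p using arr_basic(2)[OF a that] by simp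
  have piT: "\<pi> (Suc p) \<in> ?T" if "Suc p \<notin> ?S" "p < n" for p using arr_basic(3)[OF a, of "Suc p"] that by simp
  have posv: "1 \<le> rk ?T (\<pi> (Suc p))" if "Suc p \<notin> ?S" "p < n" for p using rk_pos[OF fT piT[OF that]] by simp
  have L: "set ?w \<subseteq> {x. x = -1 \<or> x = -2 \<or> 0 < x}"
  proof
    fix x assume "x \<in> set ?w"
    then obtain p where p: "p < n" "x = ?w ! p" by (metis in_set_conv_nth pf3_len)
    show "x \<in> {x. x = -1 \<or> x = -2 \<or> 0 < x}"
    proof (cases "Suc p \<in> ?S")
      case True then show ?thesis using p val neg by auto
    next
      case False then show ?thesis using p val posv[OF False p(1)] by auto
    qed
  qed
  have D: "\<forall>i<length ?w. \<forall>j<length ?w. ?w!i = ?w!j \<longrightarrow> 0 < ?w!i \<longrightarrow> i = j"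
  proof (intro allI impI)
    fix p q assume p: "p < length ?w" and q: "q < length ?w" and e: "?w!p = ?w!q" and pos: "0 < ?w!p"
    have pS: "Suc p \<notin> ?S" using val[of p] p pos neg by fastforce
    have qS: "Suc q \<notin> ?S" using val[of q] q pos neg e by fastforce
    have "rk ?T (\<pi> (Suc p)) = rk ?T (\<pi> (Suc q))" using e val[of p] val[of q] p q pS qS by simp
    then have "\<pi> (Suc p) = \<pi> (Suc q)" using rk_inj[OF fT] piT[OF pS] piT[OF qS] p q by (simp add: inj_on_def)
    then have "Suc p = Suc q" using permutes_inj[OF arr_basic(1)[OF a]] by (meson injD)
    then show "p = q" by simp
  qed
  have P: "posset ?w = (\<lambda>i. int (rk ?T (\<pi> i))) ` ?T"
  proof
    show "posset ?w \<subseteq> (\<lambda>i. int (rk ?T (\<pi> i))) ` ?T"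
    proof
      fix x assume "x \<in> posset ?w"
      then have x: "x \<in> set ?w" "0 < x" unfolding posset_def by auto
      then obtain p where p: "p < n" "x = ?w ! p" by (metis in_set_conv_nth pf3_len)
      have pS: "Suc p \<notin> ?S" using val[of p] p x neg by fastforce
      then have "Suc p \<in> ?T" using p by simp
      then show "x \<in> (\<lambda>i. int (rk ?T (\<pi> i))) ` ?T" using val[of p] p pS by auto
    qed
    show "(\<lambda>i. int (rk ?T (\<pi> i))) ` ?T \<subseteq> posset ?w"
    proof
      fix x assume "x \<in> (\<lambda>i. int (rk ?T (\<pi> i))) ` ?T"
      then obtain i where i: "i \<in> ?T" "x = int (rk ?T (\<pi> i))" by auto
      obtain p where ip: "i = Suc p" using i by (cases i) auto
      have pn: "p < n" using i ip by simp
      have pS: "Suc p \<notin> ?S" using i ip by simp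
      have "?w ! p = x" using val[OF pn] pS i ip by simp
      then have "x \<in> set ?w" using pn by (metis nth_mem pf3_len)
      moreover have "0 < x" using posv[OF pS pn] i ip by simp
      ultimately show "x \<in> posset ?w" unfolding posset_def by simp
    qed
  qed
  also have "\<dots> = int ` (rk ?T ` (\<pi> ` ?T))" by (simp add: image_image)
  also have "\<dots> = int ` {1..card ?T}" using arr_imgT[OF a] rk_bij[OF fT] unfolding bij_betw_def by simp
  also have "\<dots> = {1..int (card ?T)}" by (simp add: image_int_atLeastAtMost)
  finally have P2: "posset ?w = {1..int (card ?T)}" .
  then have "card (posset ?w) = card ?T" by simp
  then have "posset ?w = {1..int (card (posset ?w))}" using P2 by simp
  then show ?thesis unfolding wfw_def using L D by blast
qed

lemma pf3_neg_iff:
  assumes a: "(\<pi>, \<phi>) \<in> arrangements3 n" and p: "p < n"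
  shows "pf3 n \<pi> \<phi> ! p < 0 \<longleftrightarrow> Suc p \<in> Sa n \<pi> \<phi>"
proof -
  let ?T = "{1..n} - Sa n \<pi> \<phi>"
  show ?thesis
  proof (cases "Suc p \<in> Sa n \<pi> \<phi>")
    case True then show ?thesis using pf3_nth'[OF a p] arr_basic(2)[OF a True] by auto
  next
    case False
    have "\<pi> (Suc p) \<in> ?T" using arr_basic(3)[OF a, of "Suc p"] False p by simp
    then have "1 \<le> rk ?T (\<pi> (Suc p))" using rk_pos[of ?T] by simp
    then show ?thesis using pf3_nth'[OF a p] False by simp
  qed
qed

lemma pf3_inj: "inj_on (\<lambda>a. pf3 n (fst a) (snd a)) (arrangements3 n)"
proof (rule inj_onI)
  fix a b assume aA: "a \<in> arrangements3 n" and bA: "b \<in> arrangements3 n"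
    and e: "pf3 n (fst a) (snd a) = pf3 n (fst b) (snd b)"
  obtain \<pi> \<phi> where ab: "a = (\<pi>, \<phi>)" by fastforce
  obtain \<pi>' \<phi>' where bb: "b = (\<pi>', \<phi>')" by fastforce
  have A: "(\<pi>, \<phi>) \<in> arrangements3 n" using aA ab by simp
  have B: "(\<pi>', \<phi>') \<in> arrangements3 n" using bA bb by simp
  have e': "pf3 n \<pi> \<phi> = pf3 n \<pi>' \<phi>'" using e ab bb by simp
  have SS: "Sa n \<pi> \<phi> = Sa n \<pi>' \<phi>'"
  proof (rule set_eqI)
    fix i
    show "i \<in> Sa n \<pi> \<phi> \<longleftrightarrow> i \<in> Sa n \<pi>' \<phi>'"
    proof (cases "i \<in> {1..n}")
      case True
      then obtain p where p: "i = Suc p" "p < n" by (cases i) auto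
      show ?thesis using pf3_neg_iff[OF A p(2)] pf3_neg_iff[OF B p(2)] e' p(1) by simp
    next
      case False then show ?thesis unfolding Sa_def by auto
    qed
  qed
  let ?S = "Sa n \<pi> \<phi>" and ?T = "{1..n} - Sa n \<pi> \<phi>"
  have fT: "finite ?T" by simp
  have pi: "\<pi> i = \<pi>' i" for i
  proof (cases "i \<in> ?T")
    case True
    then obtain p where p: "i = Suc p" "p < n" by (cases i) auto
    have "int (rk ?T (\<pi> i)) = int (rk ?T (\<pi>' i))"
      using pf3_nth'[OF A p(2)] pf3_nth'[OF B p(2)] e' SS True p(1) by simp
    moreover have "\<pi> i \<in> ?T" "\<pi>' i \<in> ?T" using arr_basic(3)[OF A True] arr_basic(3)[OF B] True SS by auto
    ultimately show ?thesis using rk_inj[OF fT] by (simp add: inj_on_def)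
  next
    case False
    show ?thesis
    proof (cases "i \<in> ?S")
      case True
      then show ?thesis using arr_basic(2)[OF A True] arr_basic(2)[OF B] SS by auto
    next
      case False
      then have "i \<notin> {1..n}" using \<open>i \<notin> ?T\<close> by simp
      then show ?thesis using permutes_not_in[OF arr_basic(1)[OF A]] permutes_not_in[OF arr_basic(1)[OF B]] by simp
    qed
  qed
  have phi: "\<phi> i = \<phi>' i" for i
  proof (cases "i \<in> {1..n}")
    case False
    then show ?thesis using arr_basic(4)[OF A] arr_basic(4)[OF B] by simp
  next
    case True
    then obtain p where p: "i = Suc p" "p < n" by (cases i) auto
    show ?thesis
    proof (cases "i \<in> ?S")
      case True
      then show ?thesis using pf3_nth'[OF A p(2)] pf3_nth'[OF B p(2)] e' SS p(1) by simp
    next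
      case False
      have ph: "\<phi> i \<in> (if i \<in> {1..n} \<and> \<pi> i = i then {-1,-2,-3} else {0})"
        "\<phi>' i \<in> (if i \<in> {1..n} \<and> \<pi>' i = i then {-1,-2,-3} else {0})"
        using A B unfolding arrangements3_def by auto
      have F': "i \<notin> Sa n \<pi>' \<phi>'" using False SS by simp
      show ?thesis
      proof (cases "\<pi> i = i")
        case True
        then have "\<phi> i = -3" "\<phi>' i = -3" using False F' \<open>i \<in> {1..n}\<close> pi[of i] unfolding Sa_def by auto
        then show ?thesis by simp
      next
        case False
        then show ?thesis using ph pi[of i] by auto
      qed
    qed
  qed
  show "a = b" using ab bb pi phi by auto
qed


lemma pf3_surj:
  assumes lw: "length w = n" and wf: "wfw w"
  shows "\<exists>a\<in>arrangements3 n. pf3 n (fst a) (snd a) = w"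
proof -
  define S where "S = {i\<in>{1..n}. w!(i-1) < 0}"
  define T where "T = {1..n} - S"
  have fT: "finite T" unfolding T_def by simp
  have let_: "w!(i-1) = -1 \<or> w!(i-1) = -2 \<or> 0 < w!(i-1)" if "i \<in> {1..n}" for i
  proof -
    have "w!(i-1) \<in> set w" using that lw by (intro nth_mem) auto
    then show ?thesis using wf unfolding wfw_def by auto
  qed
  have posT: "0 < w!(i-1)" if "i \<in> T" for i using let_[of i] that unfolding T_def S_def by auto
  have negS: "w!(i-1) = -1 \<or> w!(i-1) = -2" if "i \<in> S" for i using let_[of i] that unfolding S_def by auto
  define r where "r i = nat (w!(i-1))" for i
  define c where "c = card (posset w)"
  have ps: "posset w = {1..int c}" using wf unfolding wfw_def c_def by blast
  have D: "\<forall>i<length w. \<forall>j<length w. w!i = w!j \<longrightarrow> 0 < w!i \<longrightarrow> i = j" using wf unfolding wfw_def by blast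
  have rinj: "inj_on r T"
  proof (rule inj_onI)
    fix i j assume i: "i \<in> T" and j: "j \<in> T" and e: "r i = r j"
    have "w!(i-1) = w!(j-1)" using e posT[OF i] posT[OF j] unfolding r_def by simp
    moreover have "i - 1 < length w" "j - 1 < length w" using i j lw unfolding T_def by auto
    ultimately have "i - 1 = j - 1" using D posT[OF i] by blast
    then show "i = j" using i j unfolding T_def by auto
  qed
  have rimg: "r ` T = {1..c}"
  proof
    show "r ` T \<subseteq> {1..c}"
    proof
      fix k assume "k \<in> r ` T"
      then obtain i where i: "i \<in> T" "k = r i" by auto
      have "w!(i-1) \<in> set w" using i lw unfolding T_def by auto
      then have "w!(i-1) \<in> posset w" using posT[OF i(1)] unfolding posset_def by simp
      then show "k \<in> {1..c}" using i ps unfolding r_def by auto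
    qed
    show "{1..c} \<subseteq> r ` T"
    proof
      fix k assume k: "k \<in> {1..c}"
      then have "int k \<in> posset w" using ps by auto
      then have "int k \<in> set w" unfolding posset_def by simp
      then obtain p where p: "p < length w" "w!p = int k" by (metis in_set_conv_nth)
      have "Suc p \<in> T" using p k lw unfolding T_def S_def by auto
      moreover have "r (Suc p) = k" unfolding r_def using p by simp
      ultimately show "k \<in> r ` T" by force
    qed
  qed
  have rbij: "bij_betw r T {1..card T}"
  proof -
    have "card T = c" using card_image[OF rinj] rimg by simp
    then show ?thesis using rinj rimg unfolding bij_betw_def by simp
  qed
  define e where "e = inv_into T (rk T)"
  have ebij: "bij_betw e {1..card T} T" unfolding e_def by (rule bij_betw_inv_into[OF rk_bij[OF fT]])
  define \<pi> where "\<pi> i = (if i \<in> T then e (r i) else i)" for i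
  have cb: "bij_betw (e \<circ> r) T T" by (rule bij_betw_trans[OF rbij ebij])
  have pb: "bij_betw \<pi> T T"
    using cb by (rule bij_betw_cong[THEN iffD1, rotated]) (simp add: \<pi>_def)
  have pT: "\<pi> permutes T" by (rule bij_imp_permutes[OF pb]) (simp add: \<pi>_def)
  have pn: "\<pi> permutes {1..n}" by (rule permutes_subset[OF pT]) (auto simp: T_def)
  define \<phi> where "\<phi> i = (if i \<in> S then w!(i-1) else if i \<in> T \<and> \<pi> i = i then -3 else 0)" for i
  have piS: "\<pi> i = i" if "i \<notin> T" for i using that unfolding \<pi>_def by simp
  have ph: "\<forall>i. \<phi> i \<in> (if i \<in> {1..n} \<and> \<pi> i = i then {-1,-2,-3} else {0})"
  proof (intro allI)
    fix i
    show "\<phi> i \<in> (if i \<in> {1..n} \<and> \<pi> i = i then {-1,-2,-3} else {0})"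
    proof (cases "i \<in> S")
      case True
      have "i \<notin> T" using True unfolding T_def by simp
      then show ?thesis using True negS[OF True] piS unfolding \<phi>_def S_def by auto
    next
      case False
      then show ?thesis unfolding \<phi>_def T_def by auto
    qed
  qed
  have arr: "(\<pi>, \<phi>) \<in> arrangements3 n"
    unfolding arrangements3_def using pn ph by blast
  have SS: "Sa n \<pi> \<phi> = S"
  proof (rule set_eqI)
    fix i
    show "i \<in> Sa n \<pi> \<phi> \<longleftrightarrow> i \<in> S"
    proof (cases "i \<in> S")
      case True
      have "i \<notin> T" using True unfolding T_def by simp
      then show ?thesis using True negS[OF True] piS unfolding Sa_def \<phi>_def S_def by auto
    next
      case False
      then show ?thesis unfolding Sa_def \<phi>_def T_def by auto
    qed
  qed
  have "pf3 n \<pi> \<phi> = w"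
  proof (rule nth_equalityI)
    show "length (pf3 n \<pi> \<phi>) = length w" using lw by simp
    fix p assume "p < length (pf3 n \<pi> \<phi>)"
    then have p: "p < n" by simp
    show "pf3 n \<pi> \<phi> ! p = w ! p"
    proof (cases "Suc p \<in> S")
      case True
      then show ?thesis using pf3_nth'[OF arr p] SS unfolding \<phi>_def by simp
    next
      case False
      then have sT: "Suc p \<in> T" using p unfolding T_def by simp
      have "r (Suc p) \<in> rk T ` T" using rbij rk_bij[OF fT] sT unfolding bij_betw_def by auto
      then have "rk T (e (r (Suc p))) = r (Suc p)" unfolding e_def by (rule f_inv_into_f)
      then have "rk T (\<pi> (Suc p)) = nat (w!p)" using sT unfolding \<pi>_def r_def by simp
      moreover have "0 < w!p" using posT[OF sT] by simp
      ultimately show ?thesis using pf3_nth'[OF arr p] SS False T_def by simp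
    qed
  qed
  then show ?thesis using arr by force
qed

lemma card_arr_words:
  "card {a\<in>arrangements3 n. P (pf3 n (fst a) (snd a))} = card {w. length w = n \<and> wfw w \<and> P w}"
proof -
  let ?f = "\<lambda>a. pf3 n (fst a) (snd a)"
  have "?f ` {a\<in>arrangements3 n. P (?f a)} = {w. length w = n \<and> wfw w \<and> P w}"
  proof
    show "?f ` {a\<in>arrangements3 n. P (?f a)} \<subseteq> {w. length w = n \<and> wfw w \<and> P w}"
    proof
      fix w assume "w \<in> ?f ` {a\<in>arrangements3 n. P (?f a)}"
      then obtain a where a: "a \<in> arrangements3 n" "P (?f a)" "w = ?f a" by blast
      obtain \<pi> \<phi> where ab: "a = (\<pi>, \<phi>)" by fastforce
      have "wfw (pf3 n \<pi> \<phi>)" using pf3_wf a(1) ab by simp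
      then show "w \<in> {w. length w = n \<and> wfw w \<and> P w}" using a ab by simp
    qed
    show "{w. length w = n \<and> wfw w \<and> P w} \<subseteq> ?f ` {a\<in>arrangements3 n. P (?f a)}"
    proof
      fix w assume "w \<in> {w. length w = n \<and> wfw w \<and> P w}"
      then have w: "length w = n" "wfw w" "P w" by auto
      obtain a where "a \<in> arrangements3 n" "?f a = w" using pf3_surj[OF w(1,2)] by blast
      then show "w \<in> ?f ` {a\<in>arrangements3 n. P (?f a)}" using w(3) by force
    qed
  qed
  moreover have "inj_on ?f {a\<in>arrangements3 n. P (?f a)}"
    by (rule inj_on_subset[OF pf3_inj]) auto
  ultimately show ?thesis using card_image by fastforce
qed

lemma red3: "red [x,y,z] = [int (card {t\<in>{x,y,z}. t \<le> x}), int (card {t\<in>{x,y,z}. t \<le> y}), int (card {t\<in>{x,y,z}. t \<le> z})]"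
  unfolding red_def by simp

lemma r123: "red [x,y,z] = [1,2,3] \<longleftrightarrow> Q123 x y z" unfolding Q123_def by (unfold red3; cases rule: linorder_cases[of x y]; cases rule: linorder_cases[of y z]; cases rule: linorder_cases[of x z]; auto simp: card_insert_if conj_disj_distribR Collect_disj_eq Collect_conv_if)
lemma r321: "red [x,y,z] = [3,2,1] \<longleftrightarrow> Q123 z y x" unfolding Q123_def by (unfold red3; cases rule: linorder_cases[of x y]; cases rule: linorder_cases[of y z]; cases rule: linorder_cases[of x z]; auto simp: card_insert_if conj_disj_distribR Collect_disj_eq Collect_conv_if)
lemma r213: "red [x,y,z] = [2,1,3] \<longleftrightarrow> Q213 x y z" unfolding Q213_def by (unfold red3; cases rule: linorder_cases[of x y]; cases rule: linorder_cases[of y z]; cases rule: linorder_cases[of x z]; auto simp: card_insert_if conj_disj_distribR Collect_disj_eq Collect_conv_if)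
lemma r312: "red [x,y,z] = [3,1,2] \<longleftrightarrow> Q213 z y x" unfolding Q213_def by (unfold red3; cases rule: linorder_cases[of x y]; cases rule: linorder_cases[of y z]; cases rule: linorder_cases[of x z]; auto simp: card_insert_if conj_disj_distribR Collect_disj_eq Collect_conv_if)
lemma r132: "red [x,y,z] = [1,3,2] \<longleftrightarrow> Q132 x y z" unfolding Q132_def by (unfold red3; cases rule: linorder_cases[of x y]; cases rule: linorder_cases[of y z]; cases rule: linorder_cases[of x z]; auto simp: card_insert_if conj_disj_distribR Collect_disj_eq Collect_conv_if)
lemma r231: "red [x,y,z] = [2,3,1] \<longleftrightarrow> Q132 z y x" unfolding Q132_def by (unfold red3; cases rule: linorder_cases[of x y]; cases rule: linorder_cases[of y z]; cases rule: linorder_cases[of x z]; auto simp: card_insert_if conj_disj_distribR Collect_disj_eq Collect_conv_if)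


lemma avP_rev1:
  assumes a: "avP (\<lambda>x y z. Q z y x) w"
  shows "avP Q (rev w)"
  unfolding avP_def
proof
  assume "\<exists>i j k. i < j \<and> j < k \<and> k < length (rev w) \<and> Q (rev w!i) (rev w!j) (rev w!k)"
  then obtain i j k where o: "i < j" "j < k" "k < length w" "Q (rev w!i) (rev w!j) (rev w!k)" by auto
  let ?L = "length w"
  have "Q (w!(?L - Suc i)) (w!(?L - Suc j)) (w!(?L - Suc k))" using o by (simp add: rev_nth)
  moreover have "?L - Suc k < ?L - Suc j" "?L - Suc j < ?L - Suc i" "?L - Suc i < ?L" using o by auto
  ultimately show False using a unfolding avP_def by blast
qed

lemma avP_rev: "avP Q (rev w) \<longleftrightarrow> avP (\<lambda>x y z. Q z y x) w"
  using avP_rev1[of Q w] avP_rev1[of "\<lambda>x y z. Q z y x" "rev w"] by auto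

lemma wfw_rev1: "wfw w \<Longrightarrow> wfw (rev w)"
proof -
  assume w: "wfw w"
  have ps: "posset (rev w) = posset w" unfolding posset_def by simp
  have D: "\<forall>i<length w. \<forall>j<length w. w!i = w!j \<longrightarrow> 0 < w!i \<longrightarrow> i = j" using w unfolding wfw_def by blast
  have "\<forall>i<length (rev w). \<forall>j<length (rev w). rev w!i = rev w!j \<longrightarrow> 0 < rev w!i \<longrightarrow> i = j"
  proof (intro allI impI)
    fix i j assume i: "i < length (rev w)" and j: "j < length (rev w)" and e: "rev w!i = rev w!j" and p: "0 < rev w!i"
    have "length w - Suc i = length w - Suc j" using D i j e p by (simp add: rev_nth)
    then show "i = j" using i j by simp
  qed
  then show ?thesis using w ps unfolding wfw_def by simp
qed

lemma card_AV_rev: "card (AV Q n) = card (AV (\<lambda>x y z. Q z y x) n)"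
proof -
  have "rev ` AV Q n = AV (\<lambda>x y z. Q z y x) n"
  proof
    show "rev ` AV Q n \<subseteq> AV (\<lambda>x y z. Q z y x) n"
    proof
      fix v assume "v \<in> rev ` AV Q n"
      then obtain w where w: "w \<in> AV Q n" "v = rev w" by auto
      have "avP (\<lambda>x y z. Q z y x) (rev w)" using avP_rev[of "\<lambda>x y z. Q z y x" w] w unfolding AV_def by simp
      then show "v \<in> AV (\<lambda>x y z. Q z y x) n" using w wfw_rev1 unfolding AV_def by auto
    qed
    show "AV (\<lambda>x y z. Q z y x) n \<subseteq> rev ` AV Q n"
    proof
      fix v assume v: "v \<in> AV (\<lambda>x y z. Q z y x) n"
      have "avP Q (rev v)" using avP_rev[of Q v] v unfolding AV_def by simp
      then have "rev v \<in> AV Q n" using v wfw_rev1 unfolding AV_def by auto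
      then show "v \<in> rev ` AV Q n" by (metis image_eqI rev_rev_ident)
    qed
  qed
  then show ?thesis by (metis card_image inj_on_inverseI rev_rev_ident)
qed

lemma c123: "1 \<le> n \<Longrightarrow> int (card (AV Q123 n)) = int (catalan (n+2)) - 2^n"
  by (rule main_count[OF Q123_d H2_123 H3_123])
lemma c213: "1 \<le> n \<Longrightarrow> int (card (AV Q213 n)) = int (catalan (n+2)) - 2^n"
  by (rule main_count[OF Q213_d H2_213 H3_213])
lemma c132: "1 \<le> n \<Longrightarrow> int (card (AV Q132 n)) = int (catalan (n+2)) - 2^n"
  by (rule main_count[OF Q132_d H2_132 H3_132])

lemma perm3_cases:
  assumes "\<sigma> permutes {1,2,3::nat}"
  shows "(\<sigma> 1, \<sigma> 2, \<sigma> 3) \<in> {(1,2,3),(1,3,2),(2,1,3),(2,3,1),(3,1,2),(3,2,1)}"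
proof -
  have i1: "\<sigma> 1 \<in> {1,2,3}" using permutes_in_image[OF assms, of 1] by simp
  have i2: "\<sigma> 2 \<in> {1,2,3}" using permutes_in_image[OF assms, of 2] by simp
  have i3: "\<sigma> 3 \<in> {1,2,3}" using permutes_in_image[OF assms, of 3] by simp
  have inj: "inj \<sigma>" by (rule permutes_inj[OF assms])
  have d1: "\<sigma> 1 \<noteq> \<sigma> 2" using inj by (simp add: inj_eq)
  have d2: "\<sigma> 1 \<noteq> \<sigma> 3" using inj by (simp add: inj_eq)
  have d3: "\<sigma> 2 \<noteq> \<sigma> 3" using inj by (simp add: inj_eq)
  have j1: "\<sigma> 1 = 1 \<or> \<sigma> 1 = 2 \<or> \<sigma> 1 = 3" using i1 by simp
  have j2: "\<sigma> 2 = 1 \<or> \<sigma> 2 = 2 \<or> \<sigma> 2 = 3" using i2 by simp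
  have j3: "\<sigma> 3 = 1 \<or> \<sigma> 3 = 2 \<or> \<sigma> 3 = 3" using i3 by simp
  show ?thesis using j1 j2 j3 d1 d2 d3 by (elim disjE) simp_all
qed

lemma avoids_AV:
  "{w. length w = n \<and> wfw w \<and> avoids w \<sigma>} = AV (\<lambda>x y z. red [x,y,z] = [int (\<sigma> 1), int (\<sigma> 2), int (\<sigma> 3)]) n"
  unfolding AV_def avoids_def avP_def by simp

theorem theorem4p1:
  fixes n :: nat and \<sigma> :: "nat \<Rightarrow> nat"
  assumes "n \<ge> 1" and "\<sigma> permutes {1,2,3}"
  shows "int (card {a \<in> arrangements3 n. avoids (pf3 n (fst a) (snd a)) \<sigma>})
           = int (catalan (n + 2)) - 2 ^ n"
proof -
  let ?Q = "\<lambda>x y z. red [x,y,z] = [int (\<sigma> 1), int (\<sigma> 2), int (\<sigma> 3)]"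
  have "card {a \<in> arrangements3 n. avoids (pf3 n (fst a) (snd a)) \<sigma>} = card (AV ?Q n)"
    using card_arr_words[of n "\<lambda>w. avoids w \<sigma>"] avoids_AV[of n \<sigma>] by simp
  moreover have "int (card (AV ?Q n)) = int (catalan (n + 2)) - 2 ^ n"
  proof -
    consider "(\<sigma> 1, \<sigma> 2, \<sigma> 3) = (1,2,3)" | "(\<sigma> 1, \<sigma> 2, \<sigma> 3) = (1,3,2)" | "(\<sigma> 1, \<sigma> 2, \<sigma> 3) = (2,1,3)"
      | "(\<sigma> 1, \<sigma> 2, \<sigma> 3) = (2,3,1)" | "(\<sigma> 1, \<sigma> 2, \<sigma> 3) = (3,1,2)" | "(\<sigma> 1, \<sigma> 2, \<sigma> 3) = (3,2,1)"
      using perm3_cases[OF assms(2)] by blast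
    then show ?thesis
    proof cases
      case 1
      then have "?Q = Q123" using r123 by (auto intro!: ext)
      then show ?thesis using c123 assms(1) by simp
    next
      case 2
      then have "?Q = Q132" using r132 by (auto intro!: ext)
      then show ?thesis using c132 assms(1) by simp
    next
      case 3
      then have "?Q = Q213" using r213 by (auto intro!: ext)
      then show ?thesis using c213 assms(1) by simp
    next
      case 4
      then have "?Q = (\<lambda>x y z. Q132 z y x)" using r231 by (auto intro!: ext)
      moreover have "int (card (AV Q132 n)) = int (catalan (n+2)) - 2^n" by (rule c132[OF assms(1)])
      ultimately show ?thesis using card_AV_rev[of Q132 n] by simp
    next
      case 5
      then have "?Q = (\<lambda>x y z. Q213 z y x)" using r312 by (auto intro!: ext)
      moreover have "int (card (AV Q213 n)) = int (catalan (n+2)) - 2^n" by (rule c213[OF assms(1)])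
      ultimately show ?thesis using card_AV_rev[of Q213 n] by simp
    next
      case 6
      then have "?Q = (\<lambda>x y z. Q123 z y x)" using r321 by (auto intro!: ext)
      moreover have "int (card (AV Q123 n)) = int (catalan (n+2)) - 2^n" by (rule c123[OF assms(1)])
      ultimately show ?thesis using card_AV_rev[of Q123 n] by simp
    qed
  qed
  ultimately show ?thesis by simp
qed

end
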